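(* Let $k$ be a field, let $A=kQ_A/I_A$ be a finite-dimensional monomial algebra with vertices $e_1,\dots,e_n$, and let $B$ be the algebra obtained from $A$ by gluing the two distinct, non-isolated vertices $e_1$ and $e_n$. Assume that for every loop $\alpha$ at $e_1$ or at $e_n$ with $\alpha^m\in Z_A$ for some $m\ge 2$, the characteristic of $k$ does not divide $m$. Then $$\dim_k\mathrm{HH}^1(A)=\dim_k\mathrm{HH}^1(B)-1-\mathrm{kspp}(1,n)+\mathrm{sp}(1,n)+c_A-c_B.$$ In particular, if $e_1$ and $e_n$ lie in the same block of $A$, then $\dim_k\mathrm{HH}^1(A)=\dim_k\mathrm{HH}^1(B)-1-\mathrm{kspp}(1,n)+\mathrm{sp}(1,n)$; if $e_1$ and $e_n$ lie in two different blocks of $A$, then $\mathrm{HH}^1(A)$ is (isomorphic to) a Lie subalgebra of $\mathrm{HH}^1(B)$ and $\dim_k\mathrm{HH}^1(A)=\dim_k\mathrm{HH}^1(B)-\mathrm{kspp}(1,n)$.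
   Context: Monomial algebra: $A=kQ_A/I_A$ with $Q_A$ a finite quiver and $I_A$ an admissible ideal generated by a minimal set $Z_A$ of paths of length $\ge 2$ (no proper subpath of an element of $Z_A$ lies in $Z_A$). $\mathcal B_A$ is the set of paths of $Q_A$ (including trivial paths $e_i$) containing no element of $Z_A$ as a subpath; it is a basis of $A$. $s(\cdot),t(\cdot)$ denote source and target; paths are written right to left. Gluing: $B$ is the subalgebra of $A$ generated by $f_1=e_1+e_n$, $f_i=e_i$ ($2\le i\le n-1$) and all arrows; $B\cong kQ_B/I_B$ where $Q_B$ is obtained from $Q_A$ by identifying $e_1,e_n$ into one vertex $f_1$, each arrow $\alpha$ of $Q_A$ giving an arrow $\alpha^*$ of $Q_B$, and $I_B$ is generated by $Z_B=\{r^*:r\in Z_A\}\cup Z_{new}$, where $Z_{new}$ consists of the paths $b^*c^*$ with $b,c$ arrows of $Q_A$ such that $t(c),s(b)\in\{e_1,e_n\}$ and $t(c)\ne s(b)$. For a path $p=a_m\cdots a_1$ put $p^*=a_m^*\cdots a_1^*$, $e_i^*=f_i$ ($2\le i\le n-1$), $e_1^*=e_n^*=f_1$. $B$ is monomial with basis $\mathcal B_B$ of paths avoiding $Z_B$. $c_A,c_B$ denote the numbers of connected components of $Q_A,Q_B$ (blocks of $A$ correspond to connected components of $Q_A$). Complex: for sets of paths $X,Y$, $X\|Y$ is the set of pairs $x\|y$ ($x\in X,y\in Y$) with $s(x)=s(y)$, $t(x)=t(y)$, and $k(X\|Y)$ the vector space with basis $X\|Y$. For a monomial algebra $\Lambda=kQ/\langle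 Z\rangle$ with basis paths $\mathcal B$: $\delta^0:k(Q_0\|\mathcal B)\to k(Q_1\|\mathcal B)$, $e\|\gamma\mapsto\sum_{s(a)=e,\,a\gamma\in\mathcal B}a\|a\gamma-\sum_{t(a)=e,\,\gamma a\in\mathcal B}a\|\gamma a$ (sums over arrows $a$); $\delta^1:k(Q_1\|\mathcal B)\to k(Z\|\mathcal B)$, $a\|\gamma\mapsto\sum_{r\in Z}r\|r^{a\|\gamma}$, where for a path $u$, $u^{a\|\gamma}$ is the sum, over all occurrences of $a$ in $u$, of the path obtained by replacing that occurrence by $\gamma$, keeping only paths in $\mathcal B$. $\mathrm{Ker}\,\delta^1$ is a Lie algebra under $[a\|\gamma,b\|\epsilon]=b\|\epsilon^{a\|\gamma}-a\|\gamma^{b\|\epsilon}$, $\mathrm{Im}\,\delta^0$ is a Lie ideal, and $\mathrm{HH}^1(\Lambda)\cong\mathrm{Ker}\,\delta^1/\mathrm{Im}\,\delta^0$ as Lie algebras. Write $\delta^i_A,\delta^i_B$ for these maps of $A$, $B$. Special paths: a path $p\in\mathcal B_A$ from $e_1$ to $e_n$ or from $e_n$ to $e_1$ is special if $\delta^0_B(f_1\|p^* )\ne0$, equivalently if there is an arrow $a$ with $ap\notin I_A$ or $pa\notin I_A$; $\mathrm{sp}(1,n)$ is the number of special paths. Special pairs: $(\alpha,p)$ with $\alpha$ an arrow of $Q_A$ and $p\in\mathcal B_A$ such that $\alpha$ starts or ends at $e_1$ or $e_n$, $\alpha^*\|p^*$ in $Q_B$, and $\alpha$ is not parallel to $p$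 in $Q_A$. $Z_{spp}$ is the intersection of $\mathrm{Ker}\,\delta^1_B$ with the span of all $\alpha^*\|p^*$ for special pairs $(\alpha,p)$, and $\mathrm{kspp}(1,n)=\dim_kZ_{spp}$. *)

theory Defs
  imports Complex_Main "HOL-Library.Function_Algebras"
begin

record ('v,'a) quiver =
  verts :: "'v set"
  arrs  :: "'a set"
  src   :: "'a \<Rightarrow> 'v"
  tgt   :: "'a \<Rightarrow> 'v"

definition wf_quiver :: "('v,'a) quiver \<Rightarrow> bool" where
  "wf_quiver Q \<longleftrightarrow> finite (verts Q) \<and> finite (arrs Q) \<and>
     (\<forall>a\<in>arrs Q. src Q a \<in> verts Q \<and> tgt Q a \<in> verts Q)"

text \<open>A nontrivial path a_m ... a_1 (written right to left, a_1 traversed first)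
  is represented by the list [a_m, ..., a_1].\<close>
definition is_apath :: "('v,'a) quiver \<Rightarrow> 'a list \<Rightarrow> bool" where
  "is_apath Q l \<longleftrightarrow> l \<noteq> [] \<and> set l \<subseteq> arrs Q \<and>
     (\<forall>i. Suc i < length l \<longrightarrow> src Q (l ! i) = tgt Q (l ! Suc i))"

datatype ('v,'a) qpath = Triv 'v | Arr "'a list"

fun psrc :: "('v,'a) quiver \<Rightarrow> ('v,'a) qpath \<Rightarrow> 'v" where
  "psrc Q (Triv v) = v"
| "psrc Q (Arr l) = src Q (last l)"

fun ptgt :: "('v,'a) quiver \<Rightarrow> ('v,'a) qpath \<Rightarrow> 'v" where
  "ptgt Q (Triv v) = v"
| "ptgt Q (Arr l) = tgt Q (hd l)"

fun is_qpath :: "('v,'a) quiver \<Rightarrow> ('v,'a) qpath \<Rightarrow> bool" where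
  "is_qpath Q (Triv v) = (v \<in> verts Q)"
| "is_qpath Q (Arr l) = is_apath Q l"

text \<open>composition p q (= p after q, i.e. "p q" written right to left)\<close>
fun pcomp :: "('v,'a) qpath \<Rightarrow> ('v,'a) qpath \<Rightarrow> ('v,'a) qpath" where
  "pcomp (Triv v) q = q"
| "pcomp (Arr l) (Triv v) = Arr l"
| "pcomp (Arr l) (Arr m) = Arr (l @ m)"

definition subpath :: "'a list \<Rightarrow> 'a list \<Rightarrow> bool" where
  "subpath u l \<longleftrightarrow> (\<exists>x y. l = x @ u @ y)"

definition pbasis :: "('v,'a) quiver \<Rightarrow> 'a list set \<Rightarrow> ('v,'a) qpath set" where
  "pbasis Q Z = {p. is_qpath Q p \<and>
     (case p of Triv _ \<Rightarrow> True | Arr l \<Rightarrow> \<not> (\<exists>z\<in>Z. subpath z l))}"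

text \<open>Finite-dimensional monomial algebra kQ/<Z>, Z a minimal set of paths of length >= 2.
  Admissibility follows from finite dimensionality (finite basis).\<close>
definition monomial_algebra :: "('v,'a) quiver \<Rightarrow> 'a list set \<Rightarrow> bool" where
  "monomial_algebra Q Z \<longleftrightarrow> wf_quiver Q \<and>
     (\<forall>z\<in>Z. is_apath Q z \<and> length z \<ge> 2) \<and>
     (\<forall>z\<in>Z. \<forall>z'\<in>Z. subpath z' z \<and> z' \<noteq> z \<longrightarrow> False) \<and>
     finite (pbasis Q Z)"

definition non_isolated :: "('v,'a) quiver \<Rightarrow> 'v \<Rightarrow> bool" where
  "non_isolated Q v \<longleftrightarrow> (\<exists>a\<in>arrs Q. src Q a = v \<or> tgt Q a = v)"

definition adj :: "('v,'a) quiver \<Rightarrow> ('v \<times> 'v) set" where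
  "adj Q = {(u,v). \<exists>a\<in>arrs Q. (src Q a = u \<and> tgt Q a = v) \<or> (src Q a = v \<and> tgt Q a = u)}"

definition conn_rel :: "('v,'a) quiver \<Rightarrow> ('v \<times> 'v) set" where
  "conn_rel Q = {(u,v). u \<in> verts Q \<and> v \<in> verts Q \<and> (u,v) \<in> (adj Q)\<^sup>*}"

definition ncomp :: "('v,'a) quiver \<Rightarrow> nat" where
  "ncomp Q = card (verts Q // conn_rel Q)"

definition same_block :: "('v,'a) quiver \<Rightarrow> 'v \<Rightarrow> 'v \<Rightarrow> bool" where
  "same_block Q u v \<longleftrightarrow> (u,v) \<in> conn_rel Q"

definition fscale :: "'k::times \<Rightarrow> ('x \<Rightarrow> 'k) \<Rightarrow> ('x \<Rightarrow> 'k)" where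
  "fscale c f = (\<lambda>x. c * f x)"

definition kdim :: "('x \<Rightarrow> 'k::field) set \<Rightarrow> nat" where
  "kdim S = vector_space.dim (fscale :: 'k \<Rightarrow> ('x \<Rightarrow> 'k) \<Rightarrow> ('x \<Rightarrow> 'k)) S"

definition kspan :: "('x \<Rightarrow> 'k::field) set \<Rightarrow> ('x \<Rightarrow> 'k) set" where
  "kspan S = module.span (fscale :: 'k \<Rightarrow> ('x \<Rightarrow> 'k) \<Rightarrow> ('x \<Rightarrow> 'k)) S"

definition par :: "('v,'a) quiver \<Rightarrow> ('v,'a) qpath set \<Rightarrow> ('v,'a) qpath set
    \<Rightarrow> (('v,'a) qpath \<times> ('v,'a) qpath) set" where
  "par Q X Y = {(x,y). x \<in> X \<and> y \<in> Y \<and> psrc Q x = psrc Q y \<and> ptgt Q x = ptgt Q y}"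

definition Q0 :: "('v,'a) quiver \<Rightarrow> ('v,'a) qpath set" where
  "Q0 Q = Triv ` verts Q"

definition Q1 :: "('v,'a) quiver \<Rightarrow> ('v,'a) qpath set" where
  "Q1 Q = (\<lambda>a. Arr [a]) ` arrs Q"

definition spanned :: "'x set \<Rightarrow> ('x \<Rightarrow> 'k::zero) set" where
  "spanned P = {f. \<forall>q. q \<notin> P \<longrightarrow> f q = 0}"

definition vind :: "'x \<Rightarrow> 'x \<Rightarrow> 'k::{zero,one}" where
  "vind y = (\<lambda>z. if z = y then 1 else 0)"

definition pt :: "'x \<Rightarrow> 'y \<Rightarrow> ('x \<times> 'y \<Rightarrow> 'k::{zero,one})" where
  "pt x y = vind (x,y)"

definition pairvec :: "'x \<Rightarrow> ('y \<Rightarrow> 'k::zero) \<Rightarrow> ('x \<times> 'y \<Rightarrow> 'k)" where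
  "pairvec x v = (\<lambda>(x',y). if x' = x then v y else 0)"

definition lin_ext :: "'x set \<Rightarrow> ('x \<Rightarrow> ('z \<Rightarrow> 'k::comm_ring)) \<Rightarrow> ('x \<Rightarrow> 'k) \<Rightarrow> ('z \<Rightarrow> 'k)" where
  "lin_ext P T f = (\<Sum>p\<in>P. fscale (f p) (T p))"

definition delta0_b :: "('v,'a) quiver \<Rightarrow> 'a list set \<Rightarrow> ('v,'a) qpath \<times> ('v,'a) qpath
    \<Rightarrow> (('v,'a) qpath \<times> ('v,'a) qpath \<Rightarrow> 'k::comm_ring_1)" where
  "delta0_b Q Z eg = (case eg of (e, \<gamma>) \<Rightarrow>
     (\<Sum>a\<in>{a\<in>arrs Q. src Q a = psrc Q e \<and> pcomp (Arr [a]) \<gamma> \<in> pbasis Q Z}.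
         pt (Arr [a]) (pcomp (Arr [a]) \<gamma>))
   - (\<Sum>a\<in>{a\<in>arrs Q. tgt Q a = psrc Q e \<and> pcomp \<gamma> (Arr [a]) \<in> pbasis Q Z}.
         pt (Arr [a]) (pcomp \<gamma> (Arr [a]))))"

definition delta0 :: "('v,'a) quiver \<Rightarrow> 'a list set
    \<Rightarrow> (('v,'a) qpath \<times> ('v,'a) qpath \<Rightarrow> 'k::comm_ring_1)
    \<Rightarrow> (('v,'a) qpath \<times> ('v,'a) qpath \<Rightarrow> 'k)" where
  "delta0 Q Z = lin_ext (par Q (Q0 Q) (pbasis Q Z)) (delta0_b Q Z)"

definition splice :: "'a list \<Rightarrow> nat \<Rightarrow> ('v,'a) qpath \<Rightarrow> ('v,'a) qpath" where
  "splice l i g = (case g of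
      Triv v \<Rightarrow> (if take i l @ drop (Suc i) l = [] then Triv v
                 else Arr (take i l @ drop (Suc i) l))
    | Arr m \<Rightarrow> Arr (take i l @ m @ drop (Suc i) l))"

definition repl :: "('v,'a) quiver \<Rightarrow> 'a list set \<Rightarrow> 'a \<Rightarrow> ('v,'a) qpath \<Rightarrow> ('v,'a) qpath
    \<Rightarrow> (('v,'a) qpath \<Rightarrow> 'k::comm_ring_1)" where
  "repl Q Z a g u = (case u of Triv _ \<Rightarrow> 0
     | Arr l \<Rightarrow> (\<Sum>i\<in>{i. i < length l \<and> l ! i = a \<and> splice l i g \<in> pbasis Q Z}.
                   vind (splice l i g)))"

definition arrow_of :: "('v,'a) qpath \<Rightarrow> 'a" where
  "arrow_of x = (case x of Arr l \<Rightarrow> hd l | Triv _ \<Rightarrow> undefined)"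

definition delta1_b :: "('v,'a) quiver \<Rightarrow> 'a list set \<Rightarrow> ('v,'a) qpath \<times> ('v,'a) qpath
    \<Rightarrow> (('v,'a) qpath \<times> ('v,'a) qpath \<Rightarrow> 'k::comm_ring_1)" where
  "delta1_b Q Z ag = (case ag of (x, g) \<Rightarrow>
     (\<lambda>(r, y). if r \<in> Arr ` Z then repl Q Z (arrow_of x) g r y else 0))"

definition delta1 :: "('v,'a) quiver \<Rightarrow> 'a list set
    \<Rightarrow> (('v,'a) qpath \<times> ('v,'a) qpath \<Rightarrow> 'k::comm_ring_1)
    \<Rightarrow> (('v,'a) qpath \<times> ('v,'a) qpath \<Rightarrow> 'k)" where
  "delta1 Q Z = lin_ext (par Q (Q1 Q) (pbasis Q Z)) (delta1_b Q Z)"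

definition Ker1 :: "('v,'a) quiver \<Rightarrow> 'a list set
    \<Rightarrow> (('v,'a) qpath \<times> ('v,'a) qpath \<Rightarrow> 'k::comm_ring_1) set" where
  "Ker1 Q Z = {f \<in> spanned (par Q (Q1 Q) (pbasis Q Z)). delta1 Q Z f = 0}"

definition Im0 :: "('v,'a) quiver \<Rightarrow> 'a list set
    \<Rightarrow> (('v,'a) qpath \<times> ('v,'a) qpath \<Rightarrow> 'k::comm_ring_1) set" where
  "Im0 Q Z = delta0 Q Z ` spanned (par Q (Q0 Q) (pbasis Q Z))"

definition hh1_dim :: "'k::field itself \<Rightarrow> ('v,'a) quiver \<Rightarrow> 'a list set \<Rightarrow> int" where
  "hh1_dim _ Q Z = int (kdim (Ker1 Q Z :: (_ \<Rightarrow> 'k) set)) - int (kdim (Im0 Q Z :: (_ \<Rightarrow> 'k) set))"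

definition br_b :: "('v,'a) quiver \<Rightarrow> 'a list set
    \<Rightarrow> ('v,'a) qpath \<times> ('v,'a) qpath \<Rightarrow> ('v,'a) qpath \<times> ('v,'a) qpath
    \<Rightarrow> (('v,'a) qpath \<times> ('v,'a) qpath \<Rightarrow> 'k::comm_ring_1)" where
  "br_b Q Z p q = (case p of (a, g) \<Rightarrow> case q of (b, e) \<Rightarrow>
      pairvec b (repl Q Z (arrow_of a) g e) - pairvec a (repl Q Z (arrow_of b) e g))"

definition bracket :: "('v,'a) quiver \<Rightarrow> 'a list set
    \<Rightarrow> (('v,'a) qpath \<times> ('v,'a) qpath \<Rightarrow> 'k::comm_ring_1)
    \<Rightarrow> (('v,'a) qpath \<times> ('v,'a) qpath \<Rightarrow> 'k)
    \<Rightarrow> (('v,'a) qpath \<times> ('v,'a) qpath \<Rightarrow> 'k)" where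
  "bracket Q Z f g = (\<Sum>p\<in>par Q (Q1 Q) (pbasis Q Z). \<Sum>q\<in>par Q (Q1 Q) (pbasis Q Z).
       fscale (f p * g q) (br_b Q Z p q))"

text \<open>HH^1(Q,Z) embeds as a Lie subalgebra into HH^1(Q',Z'): an injective Lie algebra
  homomorphism Ker/Im -> Ker'/Im', given by a linear map phi: Ker -> Ker'.\<close>
definition hh1_lie_embeds :: "'k::field itself \<Rightarrow> ('v,'a) quiver \<Rightarrow> 'a list set
    \<Rightarrow> ('v,'a) quiver \<Rightarrow> 'a list set \<Rightarrow> bool" where
  "hh1_lie_embeds _ Q Z Q' Z' \<longleftrightarrow>
    (\<exists>\<phi> :: (('v,'a) qpath \<times> ('v,'a) qpath \<Rightarrow> 'k) \<Rightarrow> (('v,'a) qpath \<times> ('v,'a) qpath \<Rightarrow> 'k).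
       (\<forall>x\<in>Ker1 Q Z. \<phi> x \<in> Ker1 Q' Z') \<and>
       (\<forall>x\<in>Ker1 Q Z. \<forall>y\<in>Ker1 Q Z. \<phi> (x + y) = \<phi> x + \<phi> y) \<and>
       (\<forall>c. \<forall>x\<in>Ker1 Q Z. \<phi> (fscale c x) = fscale c (\<phi> x)) \<and>
       (\<forall>x\<in>Ker1 Q Z. \<phi> x \<in> Im0 Q' Z' \<longleftrightarrow> x \<in> Im0 Q Z) \<and>
       (\<forall>x\<in>Ker1 Q Z. \<forall>y\<in>Ker1 Q Z.
          \<phi> (bracket Q Z x y) - bracket Q' Z' (\<phi> x) (\<phi> y) \<in> Im0 Q' Z'))"

definition glue_map :: "'v \<Rightarrow> 'v \<Rightarrow> 'v \<Rightarrow> 'v" where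
  "glue_map e1 en v = (if v = en then e1 else v)"

definition glue :: "('v,'a) quiver \<Rightarrow> 'v \<Rightarrow> 'v \<Rightarrow> ('v,'a) quiver" where
  "glue Q e1 en = \<lparr> verts = glue_map e1 en ` verts Q, arrs = arrs Q,
                    src = glue_map e1 en \<circ> src Q, tgt = glue_map e1 en \<circ> tgt Q \<rparr>"

definition Znew :: "('v,'a) quiver \<Rightarrow> 'v \<Rightarrow> 'v \<Rightarrow> 'a list set" where
  "Znew Q e1 en = {[b, c] | b c. b \<in> arrs Q \<and> c \<in> arrs Q \<and>
      tgt Q c \<in> {e1, en} \<and> src Q b \<in> {e1, en} \<and> tgt Q c \<noteq> src Q b}"

definition glueZ :: "('v,'a) quiver \<Rightarrow> 'a list set \<Rightarrow> 'v \<Rightarrow> 'v \<Rightarrow> 'a list set" where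
  "glueZ Q Z e1 en = Z \<union> Znew Q e1 en"

fun pstar :: "'v \<Rightarrow> 'v \<Rightarrow> ('v,'a) qpath \<Rightarrow> ('v,'a) qpath" where
  "pstar e1 en (Triv v) = Triv (glue_map e1 en v)"
| "pstar e1 en (Arr l) = Arr l"

definition special_paths :: "'k::field itself \<Rightarrow> ('v,'a) quiver \<Rightarrow> 'a list set \<Rightarrow> 'v \<Rightarrow> 'v
    \<Rightarrow> ('v,'a) qpath set" where
  "special_paths _ Q Z e1 en = {p \<in> pbasis Q Z.
      ((psrc Q p = e1 \<and> ptgt Q p = en) \<or> (psrc Q p = en \<and> ptgt Q p = e1)) \<and>
      delta0 (glue Q e1 en) (glueZ Q Z e1 en)
        (pt (Triv (glue_map e1 en e1)) (pstar e1 en p) :: _ \<Rightarrow> 'k) \<noteq> 0}"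

definition sp :: "'k::field itself \<Rightarrow> ('v,'a) quiver \<Rightarrow> 'a list set \<Rightarrow> 'v \<Rightarrow> 'v \<Rightarrow> nat" where
  "sp K Q Z e1 en = card (special_paths K Q Z e1 en)"

definition special_pairs :: "('v,'a) quiver \<Rightarrow> 'a list set \<Rightarrow> 'v \<Rightarrow> 'v
    \<Rightarrow> ('a \<times> ('v,'a) qpath) set" where
  "special_pairs Q Z e1 en = {(\<alpha>, p). \<alpha> \<in> arrs Q \<and> p \<in> pbasis Q Z \<and>
      (src Q \<alpha> \<in> {e1, en} \<or> tgt Q \<alpha> \<in> {e1, en}) \<and>
      psrc (glue Q e1 en) (Arr [\<alpha>]) = psrc (glue Q e1 en) (pstar e1 en p) \<and>
      ptgt (glue Q e1 en) (Arr [\<alpha>]) = ptgt (glue Q e1 en) (pstar e1 en p) \<and>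
      \<not> (src Q \<alpha> = psrc Q p \<and> tgt Q \<alpha> = ptgt Q p)}"

definition Zspp :: "'k::field itself \<Rightarrow> ('v,'a) quiver \<Rightarrow> 'a list set \<Rightarrow> 'v \<Rightarrow> 'v
    \<Rightarrow> (('v,'a) qpath \<times> ('v,'a) qpath \<Rightarrow> 'k) set" where
  "Zspp _ Q Z e1 en = Ker1 (glue Q e1 en) (glueZ Q Z e1 en) \<inter>
      kspan {pt (Arr [\<alpha>]) (pstar e1 en p) | \<alpha> p. (\<alpha>, p) \<in> special_pairs Q Z e1 en}"

definition kspp :: "'k::field itself \<Rightarrow> ('v,'a) quiver \<Rightarrow> 'a list set \<Rightarrow> 'v \<Rightarrow> 'v \<Rightarrow> nat" where
  "kspp K Q Z e1 en = kdim (Zspp K Q Z e1 en)"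

lemma vector_space_fscale: "vector_space (fscale :: 'k::field \<Rightarrow> ('x \<Rightarrow> 'k) \<Rightarrow> ('x \<Rightarrow> 'k))"
  by unfold_locales (auto simp: fscale_def algebra_simps)

end

theory Submission
  imports Defs
begin

interpretation FS: vector_space "fscale :: 'k::field \<Rightarrow> ('x \<Rightarrow> 'k) \<Rightarrow> ('x \<Rightarrow> 'k)"
  by (rule vector_space_fscale)

lemma fscale_apply[simp]: "fscale c f x = c * f x"
  by (simp add: fscale_def)

lemma sum_fun_apply: "(\<Sum>p\<in>P. F p) x = (\<Sum>p\<in>P. F p x)"
  by (induction P rule: infinite_finite_induct) auto

lemma kdim_FS: "kdim S = FS.dim S" by (simp add: kdim_def)
lemma kspan_FS: "kspan S = FS.span S" by (simp add: kspan_def)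

definition vanish :: "'x set \<Rightarrow> ('x \<Rightarrow> 'k::field) set" where
  "vanish Q = {f. \<forall>q\<in>Q. f q = 0}"

lemma subspace_vanish: "FS.subspace (vanish Q)"
  by (auto simp: FS.subspace_def vanish_def)

lemma span_vanish: "X \<subseteq> vanish Q \<Longrightarrow> FS.span X \<subseteq> vanish Q"
  by (metis FS.span_minimal subspace_vanish)

lemma spanned_vanish: "spanned P = vanish (- P)"
  by (auto simp: spanned_def vanish_def)

lemma subspace_spanned: "FS.subspace (spanned P)"
  by (simp add: spanned_vanish subspace_vanish)

lemma indep_union:
  fixes A B :: "('x \<Rightarrow> 'k::field) set"
  assumes "FS.independent A" "FS.independent B" "FS.span A \<inter> FS.span B \<subseteq> {0}"
  shows "FS.independent (A \<union> B)"
proof -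
  have AB: "A \<inter> B = {}"
  proof -
    have "A \<inter> B \<subseteq> {0}" using assms(3) FS.span_base by blast
    moreover have "0 \<notin> A" using assms(1) FS.dependent_zero by blast
    ultimately show ?thesis by blast
  qed
  have key: "\<not> (a \<in> FS.span ((X \<union> Y) - {a}))"
    if "FS.independent X" "FS.independent Y" "FS.span X \<inter> FS.span Y \<subseteq> {0}" "X \<inter> Y = {}" "a \<in> X"
    for X Y :: "('x \<Rightarrow> 'k) set" and a
  proof
    assume "a \<in> FS.span ((X \<union> Y) - {a})"
    moreover have "(X \<union> Y) - {a} = (X - {a}) \<union> Y" using that(4,5) by blast
    ultimately have "a \<in> {x + y |x y. x \<in> FS.span (X - {a}) \<and> y \<in> FS.span Y}"
      using FS.span_Un[of "X - {a}" Y] by simp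
    then obtain x y where xy: "a = x + y" "x \<in> FS.span (X - {a})" "y \<in> FS.span Y"
      by blast
    have "x \<in> FS.span X" using xy(2) FS.span_mono[of "X - {a}" X] by blast
    moreover have "a \<in> FS.span X" using that(5) FS.span_base by blast
    ultimately have "y \<in> FS.span X" using xy(1) FS.span_diff by fastforce
    then have "y = 0" using xy(3) that(3) by blast
    then have "a \<in> FS.span (X - {a})" using xy by simp
    then show False using that(1,5) FS.dependent_def by blast
  qed
  show ?thesis
    unfolding FS.dependent_def
  proof
    assume "\<exists>a\<in>A \<union> B. a \<in> FS.span (A \<union> B - {a})"
    then obtain a where a: "a \<in> A \<union> B" "a \<in> FS.span (A \<union> B - {a})" by blast
    show False
    proof (cases "a \<in> A")
      case True then show ?thesis using key[OF assms(1,2,3) AB True] a by blast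
    next
      case False
      then have "a \<in> B" using a by blast
      moreover have "FS.span B \<inter> FS.span A \<subseteq> {0}" using assms(3) by blast
      moreover have "B \<union> A = A \<union> B" by blast
      ultimately show ?thesis using key[OF assms(2,1), of a] a AB by auto
    qed
  qed
qed

lemma basis_fin:
  fixes S :: "('x \<Rightarrow> 'k::field) set"
  assumes "S \<subseteq> FS.span W" "finite W"
  obtains B where "B \<subseteq> S" "FS.independent B" "FS.span B = FS.span S" "card B = FS.dim S" "finite B"
proof -
  obtain B where B: "B \<subseteq> S" "FS.independent B" "S \<subseteq> FS.span B" "card B = FS.dim S"
    using FS.basis_exists by blast
  have "B \<subseteq> FS.span W" using B(1) assms(1) by blast
  then have "finite B" using FS.independent_span_bound[OF assms(2) B(2)] by blast
  moreover have "FS.span B = FS.span S"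
    using B(1,3) by (metis FS.span_mono FS.span_span subset_antisym)
  ultimately show ?thesis using that B by blast
qed

lemma dim_direct:
  fixes S T :: "('x \<Rightarrow> 'k::field) set"
  assumes "FS.subspace S" "FS.subspace T" "S \<inter> T \<subseteq> {0}"
    "S \<subseteq> FS.span W" "T \<subseteq> FS.span W" "finite W"
  shows "FS.dim {x + y | x y. x \<in> S \<and> y \<in> T} = FS.dim S + FS.dim T"
proof -
  obtain BS where BS: "BS \<subseteq> S" "FS.independent BS" "FS.span BS = FS.span S" "card BS = FS.dim S" "finite BS"
    using basis_fin[OF assms(4,6)] by blast
  obtain BT where BT: "BT \<subseteq> T" "FS.independent BT" "FS.span BT = FS.span T" "card BT = FS.dim T" "finite BT"
    using basis_fin[OF assms(5,6)] by blast
  have sS: "FS.span S = S" using assms(1) by simp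
  have sT: "FS.span T = T" using assms(2) by simp
  have ind: "FS.independent (BS \<union> BT)"
    using indep_union[OF BS(2) BT(2)] BS(3) BT(3) sS sT assms(3) by simp
  have sp: "FS.span (BS \<union> BT) = {x + y | x y. x \<in> S \<and> y \<in> T}"
    using FS.span_Un[of BS BT] unfolding BS(3) BT(3) sS sT .
  have dis: "BS \<inter> BT = {}"
  proof -
    have "BS \<inter> BT \<subseteq> {0}" using BS(1) BT(1) assms(3) by blast
    moreover have "0 \<notin> BS" using BS(2) FS.dependent_zero by blast
    ultimately show ?thesis by blast
  qed
  have "FS.dim {x + y | x y. x \<in> S \<and> y \<in> T} = FS.dim (FS.span (BS \<union> BT))" using sp by simp
  also have "\<dots> = card (BS \<union> BT)" using FS.dim_span_eq_card_independent[OF ind] .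
  also have "\<dots> = card BS + card BT" using dis BS(5) BT(5) by (simp add: card_Un_disjoint)
  finally show ?thesis using BS(4) BT(4) by simp
qed

lemma dim_insert_fs:
  fixes S :: "('x \<Rightarrow> 'k::field) set"
  assumes "S \<subseteq> FS.span W" "finite W" "x \<notin> FS.span S"
  shows "FS.dim (insert x S) = FS.dim S + 1"
proof -
  obtain B where B: "B \<subseteq> S" "FS.independent B" "FS.span B = FS.span S" "card B = FS.dim S" "finite B"
    using basis_fin[OF assms(1,2)] by blast
  have xB: "x \<notin> FS.span B" using B(3) assms(3) by simp
  then have xB': "x \<notin> B" using FS.span_base by blast
  have ind: "FS.independent (insert x B)" using FS.independent_insertI[OF xB B(2)] .
  have "FS.span (insert x B) = FS.span (insert x S)"
    using B(3) by (simp add: FS.span_insert)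
  then have "FS.dim (insert x S) = FS.dim (FS.span (insert x B))" by (metis FS.dim_span)
  also have "\<dots> = card (insert x B)" using FS.dim_span_eq_card_independent[OF ind] .
  also have "\<dots> = card B + 1" using xB' B(5) by simp
  finally show ?thesis using B(4) by simp
qed

lemma indep_disjoint_supports:
  fixes X :: "('x \<Rightarrow> 'k::field) set"
  assumes "0 \<notin> X" "\<And>x y q. x \<in> X \<Longrightarrow> y \<in> X \<Longrightarrow> x \<noteq> y \<Longrightarrow> x q = 0 \<or> y q = 0"
  shows "FS.independent X"
  unfolding FS.dependent_def
proof
  assume "\<exists>a\<in>X. a \<in> FS.span (X - {a})"
  then obtain a where a: "a \<in> X" "a \<in> FS.span (X - {a})" by blast
  have "a \<noteq> 0" using a(1) assms(1) by blast
  then obtain q where q: "a q \<noteq> 0" by (auto simp: fun_eq_iff)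
  have "X - {a} \<subseteq> vanish {q}" using assms(2)[OF a(1)] q by (auto simp: vanish_def)
  then have "FS.span (X - {a}) \<subseteq> vanish {q}" by (rule span_vanish)
  then show False using a(2) q by (auto simp: vanish_def)
qed

lemma vind_apply: "vind y z = (if z = y then 1 else 0)"
  by (simp add: vind_def)

lemma spanned_eq_span:
  assumes "finite P"
  shows "spanned P = FS.span (vind ` P :: ('x \<Rightarrow> 'k::field) set)"
proof
  show "FS.span (vind ` P :: ('x \<Rightarrow> 'k::field) set) \<subseteq> spanned P"
    apply (rule FS.span_minimal)
     apply (force simp: spanned_def vind_def)
    apply (rule subspace_spanned)
    done
next
  show "spanned P \<subseteq> FS.span (vind ` P :: ('x \<Rightarrow> 'k::field) set)"
  proof
    fix f :: "'x \<Rightarrow> 'k" assume f: "f \<in> spanned P"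
    have "f = (\<Sum>p\<in>P. fscale (f p) (vind p))"
    proof
      fix z
      have "(\<Sum>p\<in>P. fscale (f p) (vind p)) z = (\<Sum>p\<in>P. f p * (if z = p then 1 else 0))"
        by (simp add: sum_fun_apply vind_def)
      also have "\<dots> = f z" using f assms by (auto simp: spanned_def if_distrib sum.delta cong: if_cong)
      finally show "f z = (\<Sum>p\<in>P. fscale (f p) (vind p)) z" by simp
    qed
    moreover have "(\<Sum>p\<in>P. fscale (f p) (vind p)) \<in> FS.span (vind ` P)"
      by (intro FS.span_sum FS.span_scale FS.span_base) auto
    ultimately show "f \<in> FS.span (vind ` P)" by simp
  qed
qed

lemma span_image_param:
  fixes T :: "'p \<Rightarrow> ('x \<Rightarrow> 'k::field)"
  assumes "finite P" "x \<in> FS.span (T ` P)"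
  shows "\<exists>c. x = (\<Sum>p\<in>P. fscale (c p) (T p))"
  using assms(2)
proof (induction rule: FS.span_induct_alt)
  case base
  show ?case by (rule exI[of _ "\<lambda>_. 0"]) (auto simp: fscale_def fun_eq_iff sum_fun_apply)
next
  case (step c x y)
  then obtain p0 where p0: "p0 \<in> P" "x = T p0" by blast
  obtain d where d: "y = (\<Sum>p\<in>P. fscale (d p) (T p))" using step by blast
  show ?case
  proof (rule exI[of _ "\<lambda>p. d p + (if p = p0 then c else 0)"], rule ext)
    fix z
    have "(\<Sum>p\<in>P. fscale (d p + (if p = p0 then c else 0)) (T p)) z
        = (\<Sum>p\<in>P. d p * T p z + (if p = p0 then c * T p z else 0))"
      unfolding sum_fun_apply by (rule sum.cong) (auto simp: distrib_right)
    also have "\<dots> = (\<Sum>p\<in>P. d p * T p z) + (\<Sum>p\<in>P. (if p = p0 then c * T p z else 0))"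
      by (rule sum.distrib)
    also have "\<dots> = (\<Sum>p\<in>P. d p * T p z) + c * T p0 z"
      using p0(1) assms(1) by (simp add: sum.delta)
    finally show "(fscale c x + y) z = (\<Sum>p\<in>P. fscale (d p + (if p = p0 then c else 0)) (T p)) z"
      using p0 d by (simp add: sum_fun_apply)
  qed
qed

lemma lin_ext_apply: "lin_ext P T f x = (\<Sum>p\<in>P. f p * T p x)"
  by (simp add: lin_ext_def sum_fun_apply)

lemma lin_ext_add: "lin_ext P T (f + g) = lin_ext P T f + lin_ext P T g"
  by (rule ext) (simp add: lin_ext_apply distrib_right sum.distrib)

lemma lin_ext_scale: "lin_ext P T (fscale c f) = fscale c (lin_ext P T f)"
  by (rule ext) (simp add: lin_ext_apply sum_distrib_left mult.assoc)

lemma lin_ext_zero: "lin_ext P T 0 = 0"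
  by (rule ext) (simp add: lin_ext_apply)

lemma lin_ext_restrict:
  assumes "P' \<subseteq> P" "finite P" "\<And>p. p \<in> P - P' \<Longrightarrow> f p = 0"
  shows "lin_ext P T f = lin_ext P' T f"
  unfolding lin_ext_def
  by (rule sum.mono_neutral_right[OF assms(2,1)]) (auto simp: assms(3) fscale_def fun_eq_iff)

lemma lin_ext_cong: "(\<And>p. p \<in> P \<Longrightarrow> T p = T' p) \<Longrightarrow> lin_ext P T f = lin_ext P T' f"
  by (simp add: lin_ext_def)

lemma lin_ext_vind:
  assumes "finite P" "p \<in> P"
  shows "lin_ext P T (vind p) = (T p :: 'z \<Rightarrow> 'k::field)"
proof (rule ext)
  fix x
  have "lin_ext P T (vind p) x = (\<Sum>pa\<in>P. if pa = p then T pa x else 0)"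
    unfolding lin_ext_apply by (rule sum.cong) (auto simp: vind_def)
  also have "\<dots> = T p x" using assms by (simp add: sum.delta)
  finally show "lin_ext P T (vind p) x = T p x" .
qed

lemma lin_ext_image:
  fixes T :: "'p \<Rightarrow> ('z \<Rightarrow> 'k::field)"
  assumes "finite P"
  shows "lin_ext P T ` spanned P = FS.span (T ` P)"
proof
  show "lin_ext P T ` spanned P \<subseteq> FS.span (T ` P)"
    unfolding lin_ext_def
    apply (rule subsetI)
    apply (erule imageE)
    apply simp
    apply (rule FS.span_sum)
    apply (rule FS.span_scale)
    apply (rule FS.span_base)
    apply blast
    done
next
  show "FS.span (T ` P) \<subseteq> lin_ext P T ` spanned P"
  proof
    fix x assume "x \<in> FS.span (T ` P)"
    then obtain c where c: "x = (\<Sum>p\<in>P. fscale (c p) (T p))" using span_image_param[OF assms] by blast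
    let ?f = "\<lambda>p. if p \<in> P then c p else 0"
    have "?f \<in> spanned P" by (simp add: spanned_def)
    moreover have "lin_ext P T ?f = x" unfolding c lin_ext_def by (rule sum.cong) auto
    ultimately show "x \<in> lin_ext P T ` spanned P" by force
  qed
qed

lemma lin_ext_sub: "lin_ext P T (f - g) = lin_ext P T f - lin_ext P T g"
  by (rule ext) (simp add: lin_ext_apply left_diff_distrib sum_subtractf)

lemma span_fin_spanned:
  assumes "finite P" "S \<subseteq> spanned P"
  shows "S \<subseteq> FS.span (vind ` P :: ('x \<Rightarrow> 'k::field) set)"
  using assms spanned_eq_span by blast


lemma is_apath_Cons:
  "is_apath Q (a # l) \<longleftrightarrow> a \<in> arrs Q \<and> (l = [] \<or> (is_apath Q l \<and> src Q a = tgt Q (hd l)))"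
proof
  assume H: "is_apath Q (a # l)"
  then have a: "a \<in> arrs Q" "set l \<subseteq> arrs Q" by (auto simp: is_apath_def)
  show "a \<in> arrs Q \<and> (l = [] \<or> (is_apath Q l \<and> src Q a = tgt Q (hd l)))"
  proof (cases l)
    case Nil then show ?thesis using a by simp
  next
    case (Cons b l')
    have 1: "src Q a = tgt Q (hd l)" using H Cons unfolding is_apath_def by (metis One_nat_def length_Cons list.sel(1) nth_Cons_0 nth_Cons_Suc zero_less_Suc Suc_less_eq)
    have 2: "\<forall>i. Suc i < length l \<longrightarrow> src Q (l ! i) = tgt Q (l ! Suc i)"
    proof (intro allI impI)
      fix i assume "Suc i < length l"
      then have "Suc (Suc i) < length (a # l)" by simp
      then have "src Q ((a#l) ! Suc i) = tgt Q ((a#l) ! Suc (Suc i))" using H unfolding is_apath_def by blast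
      then show "src Q (l ! i) = tgt Q (l ! Suc i)" by simp
    qed
    show ?thesis using a 1 2 Cons by (auto simp: is_apath_def)
  qed
next
  assume H: "a \<in> arrs Q \<and> (l = [] \<or> (is_apath Q l \<and> src Q a = tgt Q (hd l)))"
  show "is_apath Q (a # l)"
    unfolding is_apath_def
  proof (intro conjI allI impI)
    show "a # l \<noteq> []" by simp
    show "set (a # l) \<subseteq> arrs Q" using H by (auto simp: is_apath_def)
    fix i assume i: "Suc i < length (a # l)"
    show "src Q ((a # l) ! i) = tgt Q ((a # l) ! Suc i)"
    proof (cases i)
      case 0 then show ?thesis using H i by (cases l) auto
    next
      case (Suc j) then show ?thesis using H i by (auto simp: is_apath_def)
    qed
  qed
qed

lemma is_apath_single: "is_apath Q [a] \<longleftrightarrow> a \<in> arrs Q"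
  by (simp add: is_apath_Cons)

lemma is_apath_append:
  assumes "l1 \<noteq> []" "l2 \<noteq> []"
  shows "is_apath Q (l1 @ l2) \<longleftrightarrow> is_apath Q l1 \<and> is_apath Q l2 \<and> src Q (last l1) = tgt Q (hd l2)"
  using assms(1)
proof (induction l1)
  case Nil then show ?case by simp
next
  case (Cons a l1)
  show ?case
  proof (cases "l1 = []")
    case True then show ?thesis using assms(2) by (auto simp: is_apath_Cons)
  next
    case False
    then show ?thesis using Cons.IH by (auto simp: is_apath_Cons)
  qed
qed

lemma subpath_Nil_r: "subpath z [] \<longleftrightarrow> z = []"
  by (auto simp: subpath_def)

lemma subpath_Cons: "subpath z (a # l) \<longleftrightarrow> (\<exists>y. a # l = z @ y) \<or> subpath z l"
proof
  assume "subpath z (a # l)"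
  then obtain x y where xy: "a # l = x @ z @ y" by (auto simp: subpath_def)
  show "(\<exists>y. a # l = z @ y) \<or> subpath z l"
  proof (cases x)
    case Nil then show ?thesis using xy by auto
  next
    case (Cons b x') then show ?thesis using xy by (auto simp: subpath_def)
  qed
next
  assume "(\<exists>y. a # l = z @ y) \<or> subpath z l"
  then show "subpath z (a # l)"
    by (auto simp: subpath_def) (metis append_Nil, metis append_Cons)
qed

lemma subpath_append_l: "subpath z l \<Longrightarrow> subpath z (x @ l)"
  by (auto simp: subpath_def) (metis append.assoc)

lemma subpath_append_r: "subpath z l \<Longrightarrow> subpath z (l @ y)"
  by (auto simp: subpath_def) (metis append.assoc)

lemma subpath_trans: "subpath u v \<Longrightarrow> subpath v w \<Longrightarrow> subpath u w"
  by (auto simp: subpath_def) (metis append.assoc)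

lemma subpath_refl: "subpath u u"
  by (auto simp: subpath_def intro: exI[of _ "[]"])

lemma subpath_length: "subpath u v \<Longrightarrow> length u \<le> length v"
  by (auto simp: subpath_def)

lemma subpath_set: "subpath u v \<Longrightarrow> set u \<subseteq> set v"
  by (auto simp: subpath_def)

lemma subpath_replicate:
  assumes "subpath z (replicate n a)"
  shows "z = replicate (length z) a"
proof -
  have "set z \<subseteq> {a}" using subpath_set[OF assms] by auto
  then show ?thesis by (metis replicate_length_same empty_iff insert_iff subset_iff)
qed

lemma subpath_replicate2: "m \<le> n \<Longrightarrow> subpath (replicate m a) (replicate n a)"
  unfolding subpath_def
  by (rule exI[of _ "[]"], rule exI[of _ "replicate (n - m) a"]) (simp add: replicate_add[symmetric])

lemma glue_map_simps[simp]:
  "glue_map e1 en en = e1" "v \<noteq> en \<Longrightarrow> glue_map e1 en v = v"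
  by (auto simp: glue_map_def)

lemma glue_sel[simp]:
  "verts (glue Q e1 en) = glue_map e1 en ` verts Q"
  "arrs (glue Q e1 en) = arrs Q"
  "src (glue Q e1 en) = glue_map e1 en \<circ> src Q"
  "tgt (glue Q e1 en) = glue_map e1 en \<circ> tgt Q"
  by (auto simp: glue_def)

lemma glue_map_eq:
  "glue_map e1 en u = glue_map e1 en w \<longleftrightarrow> u = w \<or> (u = e1 \<and> w = en) \<or> (u = en \<and> w = e1)"
  by (auto simp: glue_map_def)

lemma glue_map_in: "glue_map e1 en v \<in> {e1, en} \<longleftrightarrow> v \<in> {e1, en}"
  by (auto simp: glue_map_def)

lemma pcomp_Arr_Arr[simp]: "pcomp (Arr l) (Arr m) = Arr (l @ m)" by simp


locale GS =
  fixes Q :: "('v,'a) quiver" and Z :: "'a list set" and e1 en :: 'v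
  assumes ma: "monomial_algebra Q Z"
    and e1V: "e1 \<in> verts Q" and enV: "en \<in> verts Q" and ne: "e1 \<noteq> en"
    and ni1: "non_isolated Q e1" and nin: "non_isolated Q en"
begin

abbreviation "QB \<equiv> glue Q e1 en"
abbreviation "ZB \<equiv> glueZ Q Z e1 en"
abbreviation "gm \<equiv> glue_map e1 en"
abbreviation "BA \<equiv> pbasis Q Z"
abbreviation "BB \<equiv> pbasis QB ZB"
abbreviation "ZN \<equiv> Znew Q e1 en"

lemma wf: "finite (verts Q)" "finite (arrs Q)" "\<And>a. a \<in> arrs Q \<Longrightarrow> src Q a \<in> verts Q"
  "\<And>a. a \<in> arrs Q \<Longrightarrow> tgt Q a \<in> verts Q"
  using ma by (auto simp: monomial_algebra_def wf_quiver_def)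

lemma Zp: "z \<in> Z \<Longrightarrow> is_apath Q z" "z \<in> Z \<Longrightarrow> length z \<ge> 2"
  using ma by (auto simp: monomial_algebra_def)

lemma Zmin: "z \<in> Z \<Longrightarrow> z' \<in> Z \<Longrightarrow> subpath z' z \<Longrightarrow> z' = z"
  using ma by (auto simp: monomial_algebra_def)

lemma finBA: "finite BA"
  using ma by (auto simp: monomial_algebra_def)

lemma ZN_iff: "[b, c] \<in> ZN \<longleftrightarrow> b \<in> arrs Q \<and> c \<in> arrs Q \<and> tgt Q c \<in> {e1, en} \<and> src Q b \<in> {e1, en} \<and> tgt Q c \<noteq> src Q b"
  by (auto simp: Znew_def)

lemma ZN_form: "z \<in> ZN \<Longrightarrow> \<exists>b c. z = [b, c]"
  by (auto simp: Znew_def)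

lemma apath_glue_iff:
  "set l \<subseteq> arrs Q \<Longrightarrow> (is_apath QB l \<and> \<not> (\<exists>z\<in>ZN. subpath z l)) \<longleftrightarrow> is_apath Q l"
proof (induction l)
  case Nil then show ?case by (simp add: is_apath_def)
next
  case (Cons a l)
  have a: "a \<in> arrs Q" using Cons.prems by simp
  show ?case
  proof (cases "l = []")
    case True
    have "\<not> subpath z [a]" if "z \<in> ZN" for z
      using that subpath_length[of z "[a]"] by (auto simp: Znew_def)
    then show ?thesis using True a by (auto simp: is_apath_Cons)
  next
    case False
    have hl: "hd l \<in> arrs Q" using Cons.prems False by (cases l) auto
    have sub: "(\<exists>z\<in>ZN. subpath z (a # l)) \<longleftrightarrow> [a, hd l] \<in> ZN \<or> (\<exists>z\<in>ZN. subpath z l)"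
    proof
      assume "\<exists>z\<in>ZN. subpath z (a # l)"
      then obtain z where z: "z \<in> ZN" "subpath z (a # l)" by blast
      obtain b c where bc: "z = [b, c]" using ZN_form[OF z(1)] by blast
      from z(2)[unfolded subpath_Cons] show "[a, hd l] \<in> ZN \<or> (\<exists>z\<in>ZN. subpath z l)"
        using z(1) bc False by (cases l) auto
    next
      assume "[a, hd l] \<in> ZN \<or> (\<exists>z\<in>ZN. subpath z l)"
      then show "\<exists>z\<in>ZN. subpath z (a # l)"
      proof
        assume A: "[a, hd l] \<in> ZN"
        have "a # l = [a, hd l] @ tl l" using False by simp
        then have "subpath [a, hd l] (a # l)" unfolding subpath_Cons by blast
        then show ?thesis using A by blast
      next
        assume "\<exists>z\<in>ZN. subpath z l"
        then show ?thesis unfolding subpath_Cons by blast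
      qed
    qed
    have "[a, hd l] \<in> ZN \<longleftrightarrow> tgt Q (hd l) \<in> {e1, en} \<and> src Q a \<in> {e1, en} \<and> tgt Q (hd l) \<noteq> src Q a"
      using ZN_iff a hl by blast
    then have "(glue_map e1 en (src Q a) = glue_map e1 en (tgt Q (hd l)) \<and> [a, hd l] \<notin> ZN) \<longleftrightarrow> src Q a = tgt Q (hd l)"
      by (auto simp: glue_map_eq)
    then show ?thesis using Cons False a sub by (auto simp: is_apath_Cons)
  qed
qed

lemma apath_set: "is_apath Q l \<Longrightarrow> set l \<subseteq> arrs Q"
  by (simp add: is_apath_def)

lemma apath_QB_set: "is_apath QB l \<Longrightarrow> set l \<subseteq> arrs Q"
  by (simp add: is_apath_def)

lemma basis_arr: "Arr l \<in> BB \<longleftrightarrow> Arr l \<in> BA"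
proof
  assume H: "Arr l \<in> BB"
  then have "is_apath QB l" "\<not> (\<exists>z\<in>ZB. subpath z l)" by (auto simp: pbasis_def)
  then have "is_apath Q l" "\<not> (\<exists>z\<in>Z. subpath z l)"
    using apath_glue_iff[OF apath_QB_set] by (auto simp: glueZ_def)
  then show "Arr l \<in> BA" by (simp add: pbasis_def)
next
  assume H: "Arr l \<in> BA"
  then have "is_apath Q l" "\<not> (\<exists>z\<in>Z. subpath z l)" by (auto simp: pbasis_def)
  then have "is_apath QB l" "\<not> (\<exists>z\<in>ZB. subpath z l)"
    using apath_glue_iff[OF apath_set] by (auto simp: glueZ_def)
  then show "Arr l \<in> BB" by (simp add: pbasis_def)
qed

lemma gmV: "gm ` verts Q = verts Q - {en}"
proof
  show "gm ` verts Q \<subseteq> verts Q - {en}" using e1V ne by (auto simp: glue_map_def)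
  show "verts Q - {en} \<subseteq> gm ` verts Q"
  proof
    fix v assume "v \<in> verts Q - {en}"
    then show "v \<in> gm ` verts Q" by (metis DiffE glue_map_simps(2) image_eqI insertI1)
  qed
qed

lemma basis_triv_A: "Triv v \<in> BA \<longleftrightarrow> v \<in> verts Q"
  by (simp add: pbasis_def)

lemma basis_triv_B: "Triv v \<in> BB \<longleftrightarrow> v \<in> verts Q \<and> v \<noteq> en"
  by (simp add: pbasis_def gmV)

lemma BB_eq: "BB = BA - {Triv en}"
proof (rule set_eqI)
  fix q show "q \<in> BB \<longleftrightarrow> q \<in> BA - {Triv en}"
    by (cases q) (auto simp: basis_arr basis_triv_A basis_triv_B)
qed

lemma basis_neq: "q \<noteq> Triv en \<Longrightarrow> q \<in> BB \<longleftrightarrow> q \<in> BA"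
  by (simp add: BB_eq)

lemma finBB: "finite BB" using finBA BB_eq by simp

lemma BA_arr: "Arr l \<in> BA \<Longrightarrow> is_apath Q l \<and> l \<noteq> []"
  by (simp add: pbasis_def is_apath_def)

lemma BA_single: "Arr [a] \<in> BA \<longleftrightarrow> a \<in> arrs Q"
proof -
  have "\<not> subpath z [a]" if "z \<in> Z" for z
    using Zp(2)[OF that] subpath_length[of z "[a]"] by auto
  then show ?thesis unfolding pbasis_def is_qpath.simps is_apath_single mem_Collect_eq qpath.case
    by blast
qed

lemma BA_sub: "Arr l \<in> BA \<Longrightarrow> subpath m l \<Longrightarrow> m \<noteq> [] \<Longrightarrow> Arr m \<in> BA"
proof -
  assume H: "Arr l \<in> BA" "subpath m l" "m \<noteq> []"
  then obtain x y where l: "l = x @ m @ y" by (auto simp: subpath_def)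
  have ap: "is_apath Q l" using H by (simp add: pbasis_def)
  have my: "is_apath Q (m @ y)"
  proof (cases "x = []")
    case True then show ?thesis using ap l by simp
  next
    case False
    have "m @ y \<noteq> []" using H(3) by simp
    then show ?thesis using ap l False is_apath_append[of x "m @ y" Q] by simp
  qed
  have "is_apath Q m"
  proof (cases "y = []")
    case True then show ?thesis using my by simp
  next
    case False
    then show ?thesis using my H(3) is_apath_append[of m y Q] by simp
  qed
  moreover have "\<not> (\<exists>z\<in>Z. subpath z m)"
  proof
    assume "\<exists>z\<in>Z. subpath z m"
    then obtain z where "z \<in> Z" "subpath z m" by blast
    then have "z \<in> Z" "subpath z l" using H(2) subpath_trans by blast+
    then show False using H(1) by (auto simp: pbasis_def)
  qed
  ultimately show ?thesis by (simp add: pbasis_def)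
qed

lemma BA_cons: "Arr (a # l) \<in> BA \<Longrightarrow> l \<noteq> [] \<Longrightarrow> src Q a = tgt Q (hd l) \<and> Arr l \<in> BA"
proof -
  assume H: "Arr (a # l) \<in> BA" "l \<noteq> []"
  have "subpath l (a # l)" by (simp add: subpath_Cons subpath_refl)
  then have "Arr l \<in> BA" using BA_sub[OF H(1)] H(2) by blast
  moreover have "is_apath Q (a # l)" using BA_arr[OF H(1)] by blast
  ultimately show ?thesis using H(2) unfolding is_apath_Cons by blast
qed

lemma BA_snoc: "Arr (l @ [a]) \<in> BA \<Longrightarrow> l \<noteq> [] \<Longrightarrow> tgt Q a = src Q (last l) \<and> Arr l \<in> BA"
proof -
  assume H: "Arr (l @ [a]) \<in> BA" "l \<noteq> []"
  have "subpath l (l @ [a])" by (simp add: subpath_append_r subpath_refl)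
  then have "Arr l \<in> BA" using BA_sub[OF H(1)] H(2) by blast
  moreover have "is_apath Q (l @ [a])" using BA_arr[OF H(1)] by blast
  ultimately show ?thesis using H(2) is_apath_append[of l "[a]" Q] by auto
qed

lemma psrc_B: "q \<in> BB \<Longrightarrow> psrc QB q = gm (psrc Q q)"
  by (cases q) (auto simp: basis_triv_B)

lemma ptgt_B: "q \<in> BB \<Longrightarrow> ptgt QB q = gm (ptgt Q q)"
  by (cases q) (auto simp: basis_triv_B)

end


lemma sum_single:
  assumes "finite P" "p0 \<in> P" "\<And>p. p \<in> P \<Longrightarrow> h p = (if p = p0 then c else 0)"
  shows "(\<Sum>p\<in>P. f p * h p) = f p0 * (c :: 'k::comm_ring_1)"
proof -
  have "(\<Sum>p\<in>P. f p * h p) = (\<Sum>p\<in>P. if p = p0 then f p0 * c else 0)"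
    by (rule sum.cong) (auto simp: assms(3))
  also have "\<dots> = f p0 * c" using assms(1,2) by (simp add: sum.delta)
  finally show ?thesis .
qed

lemma repl_Arr_apply:
  "repl Q Z a g (Arr l) y = (of_nat (card {i. i < length l \<and> l ! i = a \<and> splice l i g \<in> pbasis Q Z \<and> splice l i g = y}) :: 'k::comm_ring_1)"
proof -
  let ?I = "{i. i < length l \<and> l ! i = a \<and> splice l i g \<in> pbasis Q Z}"
  have fin: "finite ?I" by simp
  have "repl Q Z a g (Arr l) y = (\<Sum>i\<in>?I. (if splice l i g = y then 1 else 0 :: 'k))"
    by (simp add: repl_def sum_fun_apply vind_def eq_commute)
  also have "\<dots> = (\<Sum>i\<in>{i\<in>?I. splice l i g = y}. 1)"
    using sum.inter_filter[OF fin, of "\<lambda>_. 1::'k" "\<lambda>i. splice l i g = y"] by simp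
  also have "\<dots> = of_nat (card {i\<in>?I. splice l i g = y})" by simp
  also have "{i\<in>?I. splice l i g = y} = {i. i < length l \<and> l ! i = a \<and> splice l i g \<in> pbasis Q Z \<and> splice l i g = y}"
    by auto
  finally show ?thesis .
qed

lemma repl_Triv: "repl Q Z a g (Triv v) = 0"
  by (simp add: repl_def)

lemma repl_nz:
  assumes "(repl Q Z a g (Arr l) y :: 'k::comm_ring_1) \<noteq> 0"
  shows "\<exists>i<length l. l ! i = a \<and> splice l i g = y \<and> y \<in> pbasis Q Z"
proof (rule ccontr)
  assume "\<not> ?thesis"
  then have E: "{i. i < length l \<and> l ! i = a \<and> splice l i g \<in> pbasis Q Z \<and> splice l i g = y} = {}" by auto
  have "(repl Q Z a g (Arr l) y :: 'k) = of_nat (card ({} :: nat set))"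
    unfolding repl_Arr_apply E ..
  then show False using assms by simp
qed

lemma d1b_apply:
  "delta1_b Q Z (x, g) (r, y) = (if r \<in> Arr ` Z then repl Q Z (arrow_of x) g r y else 0)"
  by (simp add: delta1_b_def)

lemma arrow_of_single[simp]: "arrow_of (Arr [a]) = a"
  by (simp add: arrow_of_def)

lemma splice_2:
  "splice [b, c] 0 (Triv w) = Arr [c]" "splice [b, c] 0 (Arr m) = Arr (m @ [c])"
  "splice [b, c] (Suc 0) (Triv w) = Arr [b]" "splice [b, c] (Suc 0) (Arr m) = Arr (b # m)"
  by (simp_all add: splice_def)

lemma splice_decomp:
  assumes "i < length l"
  shows "splice l i g = (case g of Triv w \<Rightarrow> if take i l @ drop (Suc i) l = [] then Triv w else Arr (take i l @ drop (Suc i) l)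
     | Arr m \<Rightarrow> Arr (take i l @ m @ drop (Suc i) l))"
  by (simp add: splice_def)

context GS begin

abbreviation "P1A \<equiv> par Q (Q1 Q) BA"
abbreviation "P1B \<equiv> par QB (Q1 QB) BB"

definition LA :: "(('v,'a) qpath \<times> ('v,'a) qpath) set" where "LA = {(Arr [a], Triv v) | a v. a \<in> arrs Q \<and> src Q a = v \<and> tgt Q a = v \<and> v \<in> {e1, en}}"
definition LB :: "(('v,'a) qpath \<times> ('v,'a) qpath) set" where "LB = {(Arr [a], Triv e1) | a. a \<in> arrs Q \<and> src Q a = tgt Q a \<and> src Q a \<in> {e1, en}}"
definition "SP = P1B - LB - P1A"

lemma Q1B: "Q1 QB = Q1 Q" by (simp add: Q1_def)

lemma P1A_iff: "(x, y) \<in> P1A \<longleftrightarrow> (\<exists>a\<in>arrs Q. x = Arr [a] \<and> y \<in> BA \<and> src Q a = psrc Q y \<and> tgt Q a = ptgt Q y)"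
  by (auto simp: par_def Q1_def)

lemma P1B_iff: "(x, y) \<in> P1B \<longleftrightarrow> (\<exists>a\<in>arrs Q. x = Arr [a] \<and> y \<in> BB \<and> gm (src Q a) = gm (psrc Q y) \<and> gm (tgt Q a) = gm (ptgt Q y))"
proof -
  have "(x, y) \<in> P1B \<longleftrightarrow> (\<exists>a\<in>arrs Q. x = Arr [a] \<and> y \<in> BB \<and> gm (src Q a) = psrc QB y \<and> gm (tgt Q a) = ptgt QB y)"
    by (auto simp: par_def Q1_def)
  then show ?thesis using psrc_B ptgt_B by auto
qed

lemma finP1A: "finite P1A"
proof -
  have "P1A \<subseteq> Q1 Q \<times> BA" by (auto simp: par_def)
  moreover have "finite (Q1 Q)" using wf(2) by (simp add: Q1_def)
  ultimately show ?thesis using finBA finite_subset by blast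
qed

lemma finP1B: "finite P1B"
proof -
  have "P1B \<subseteq> Q1 Q \<times> BB" by (auto simp: par_def Q1B)
  moreover have "finite (Q1 Q)" using wf(2) by (simp add: Q1_def)
  ultimately show ?thesis using finBB finite_subset by blast
qed

lemma LA_sub: "LA \<subseteq> P1A"
  by (auto simp: LA_def P1A_iff basis_triv_A BA_single wf)

lemma LB_sub: "LB \<subseteq> P1B"
proof
  fix p assume "p \<in> LB"
  then obtain a where a: "p = (Arr [a], Triv e1)" "a \<in> arrs Q" "src Q a = tgt Q a" "src Q a \<in> {e1, en}"
    by (auto simp: LB_def)
  have "gm (src Q a) = e1" using a(4) by (auto simp: glue_map_def)
  then show "p \<in> P1B" using a e1V ne by (auto simp: P1B_iff basis_triv_B)
qed

lemma P1A_LA_sub: "P1A - LA \<subseteq> P1B - LB"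
proof
  fix p assume p: "p \<in> P1A - LA"
  then obtain a y where a: "p = (Arr [a], y)" "a \<in> arrs Q" "y \<in> BA" "src Q a = psrc Q y" "tgt Q a = ptgt Q y"
    by (metis DiffD1 P1A_iff surj_pair)
  have yn: "y \<noteq> Triv en"
  proof
    assume "y = Triv en"
    then have "p \<in> LA" using a by (auto simp: LA_def)
    then show False using p by blast
  qed
  have "p \<in> P1B" using a yn by (auto simp: P1B_iff basis_neq)
  moreover have "p \<notin> LB"
  proof
    assume "p \<in> LB"
    then have "y = Triv e1" using a by (auto simp: LB_def)
    then have "p \<in> LA" using a by (auto simp: LA_def)
    then show False using p by blast
  qed
  ultimately show "p \<in> P1B - LB" by blast
qed

lemma P1B_LB: "P1B - LB = (P1A - LA) \<union> SP"
proof
  show "(P1A - LA) \<union> SP \<subseteq> P1B - LB" using P1A_LA_sub by (auto simp: SP_def)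
  show "P1B - LB \<subseteq> (P1A - LA) \<union> SP"
  proof
    fix p assume p: "p \<in> P1B - LB"
    show "p \<in> (P1A - LA) \<union> SP"
    proof (cases "p \<in> P1A")
      case False then show ?thesis using p by (auto simp: SP_def)
    next
      case True
      have "p \<notin> LA"
      proof
        assume "p \<in> LA"
        then obtain a v where av: "p = (Arr [a], Triv v)" "a \<in> arrs Q" "src Q a = v" "tgt Q a = v" "v \<in> {e1, en}"
          by (auto simp: LA_def)
        show False
        proof (cases "v = en")
          case True
          then have "Triv en \<in> BB" using p av P1B_iff by auto
          then show ?thesis by (simp add: basis_triv_B)
        next
          case False
          then have "v = e1" using av by auto
          then have "p \<in> LB" using av by (auto simp: LB_def)
          then show ?thesis using p by blast
        qed
      qed
      then show ?thesis using True by blast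
    qed
  qed
qed

lemma SP_disj: "(P1A - LA) \<inter> SP = {}"
  by (auto simp: SP_def)

lemma SP_sub: "SP \<subseteq> P1B" by (auto simp: SP_def)

lemma special_pairs_set:
  "{(Arr [\<alpha>], pstar e1 en p) | \<alpha> p. (\<alpha>, p) \<in> special_pairs Q Z e1 en} = SP \<union> LB"
proof
  show "{(Arr [\<alpha>], pstar e1 en p) | \<alpha> p. (\<alpha>, p) \<in> special_pairs Q Z e1 en} \<subseteq> SP \<union> LB"
  proof
    fix q :: "('v,'a) qpath \<times> ('v,'a) qpath"
    assume "q \<in> {(Arr [\<alpha>], pstar e1 en p) | \<alpha> p. (\<alpha>, p) \<in> special_pairs Q Z e1 en}"
    then obtain \<alpha> p where q: "q = (Arr [\<alpha>], pstar e1 en p)" "\<alpha> \<in> arrs Q" "p \<in> BA"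
      "src Q \<alpha> \<in> {e1, en} \<or> tgt Q \<alpha> \<in> {e1, en}"
      "psrc QB (Arr [\<alpha>]) = psrc QB (pstar e1 en p)"
      "ptgt QB (Arr [\<alpha>]) = ptgt QB (pstar e1 en p)"
      "\<not> (src Q \<alpha> = psrc Q p \<and> tgt Q \<alpha> = ptgt Q p)"
      by (auto simp: special_pairs_def)
    have ps: "pstar e1 en p \<in> BB"
    proof (cases p)
      case (Triv v)
      then have "v \<in> verts Q" using q(3) basis_triv_A by simp
      then show ?thesis using Triv e1V ne by (auto simp: basis_triv_B glue_map_def)
    next
      case (Arr l) then show ?thesis using q(3) basis_arr by simp
    qed
    have gp: "psrc QB (pstar e1 en p) = gm (psrc Q p)" "ptgt QB (pstar e1 en p) = gm (ptgt Q p)"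
      by (cases p; simp)+
    have inB: "q \<in> P1B"
      unfolding q(1) P1B_iff using q(2,5,6) ps gp psrc_B[OF ps] ptgt_B[OF ps] by auto
    show "q \<in> SP \<union> LB"
    proof (cases "q \<in> P1A")
      case False then show ?thesis using inB by (auto simp: SP_def)
    next
      case True
      then have par: "src Q \<alpha> = psrc Q (pstar e1 en p)" "tgt Q \<alpha> = ptgt Q (pstar e1 en p)"
        using q(1) by (auto simp: P1A_iff)
      show ?thesis
      proof (cases p)
        case (Arr l) then show ?thesis using par q(7) by simp
      next
        case (Triv v)
        then have "gm v \<noteq> v" using par q(7) by auto
        then have "v = en" by (metis glue_map_simps(2))
        then have "q \<in> LB" using Triv q par by (auto simp: LB_def)
        then show ?thesis by blast
      qed
    qed
  qed
next
  show "SP \<union> LB \<subseteq> {(Arr [\<alpha>], pstar e1 en p) | \<alpha> p. (\<alpha>, p) \<in> special_pairs Q Z e1 en}"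
  proof
    fix q :: "('v,'a) qpath \<times> ('v,'a) qpath"
    assume q: "q \<in> SP \<union> LB"
    show "q \<in> {(Arr [\<alpha>], pstar e1 en p) | \<alpha> p. (\<alpha>, p) \<in> special_pairs Q Z e1 en}"
    proof (cases "q \<in> SP")
      case True
      then have qB: "q \<in> P1B" "q \<notin> P1A" by (auto simp: SP_def)
      then obtain a y where a: "q = (Arr [a], y)" "a \<in> arrs Q" "y \<in> BB"
        "gm (src Q a) = gm (psrc Q y)" "gm (tgt Q a) = gm (ptgt Q y)"
        by (metis P1B_iff surj_pair)
      have yA: "y \<in> BA" using a(3) BB_eq by auto
      have npar: "\<not> (src Q a = psrc Q y \<and> tgt Q a = ptgt Q y)" using qB(2) a yA by (auto simp: P1A_iff)
      have touch: "src Q a \<in> {e1, en} \<or> tgt Q a \<in> {e1, en}"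
        using a(4,5) npar by (auto simp: glue_map_eq)
      have py: "pstar e1 en y = y"
      proof (cases y)
        case (Triv w) then have "w \<noteq> en" using a(3) basis_triv_B by auto
        then show ?thesis using Triv by simp
      qed simp
      have "(a, y) \<in> special_pairs Q Z e1 en"
        unfolding special_pairs_def using a yA npar touch py psrc_B[OF a(3)] ptgt_B[OF a(3)] by auto
      then show ?thesis using a(1) py by force
    next
      case False
      then have "q \<in> LB" using q by blast
      then obtain a where a: "q = (Arr [a], Triv e1)" "a \<in> arrs Q" "src Q a = tgt Q a" "src Q a \<in> {e1, en}"
        by (auto simp: LB_def)
      show ?thesis
      proof (cases "src Q a = e1")
        case True
        have "(a, Triv en) \<in> special_pairs Q Z e1 en"
          unfolding special_pairs_def using a True ne enV by (auto simp: basis_triv_A)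
        moreover have "pstar e1 en (Triv en) = Triv e1" by simp
        ultimately show ?thesis using a(1) by force
      next
        case False
        then have "src Q a = en" using a by auto
        then have "(a, Triv e1) \<in> special_pairs Q Z e1 en"
          unfolding special_pairs_def using a ne e1V by (auto simp: basis_triv_A)
        moreover have "pstar e1 en (Triv e1) = Triv e1" using ne by simp
        ultimately show ?thesis using a(1) by force
      qed
    qed
  qed
qed

end


context GS begin

lemma splice_ne_en: "g \<noteq> Triv en \<Longrightarrow> splice l i g \<noteq> Triv en"
  by (auto simp: splice_def split: qpath.splits)

lemma repl_eq_B:
  assumes "g \<noteq> Triv en"
  shows "repl QB ZB a g u = repl Q Z a g u"
proof (cases u)
  case (Triv v) then show ?thesis by (simp add: repl_def)
next
  case (Arr l)
  have "{i. i < length l \<and> l ! i = a \<and> splice l i g \<in> BB} = {i. i < length l \<and> l ! i = a \<and> splice l i g \<in> BA}"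
    using basis_neq[OF splice_ne_en[OF assms]] by blast
  then show ?thesis using Arr by (simp add: repl_def)
qed

lemma ZN_repl_zero:
  assumes p: "(Arr [a], g) \<in> P1A - LA" and bc: "[b, c] \<in> ZN"
  shows "repl QB ZB a g (Arr [b, c]) = 0"
proof -
  have pA: "a \<in> arrs Q" "g \<in> BA" "src Q a = psrc Q g" "tgt Q a = ptgt Q g"
    using p by (auto simp: P1A_iff)
  have nL: "(Arr [a], g) \<notin> LA" using p by blast
  have Z: "tgt Q c \<in> {e1, en}" "src Q b \<in> {e1, en}" "tgt Q c \<noteq> src Q b" using bc ZN_iff by auto
  have E: "{i. i < length [b, c] \<and> [b, c] ! i = a \<and> splice [b, c] i g \<in> BB} = {}"
  proof (rule ccontr)
    assume "{i. i < length [b, c] \<and> [b, c] ! i = a \<and> splice [b, c] i g \<in> BB} \<noteq> {}"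
    then obtain i where "i \<in> {i. i < length [b, c] \<and> [b, c] ! i = a \<and> splice [b, c] i g \<in> BB}" by blast
    then have i: "i < 2" "[b, c] ! i = a" "splice [b, c] i g \<in> BB" by auto
    show False
    proof (cases "i = 0")
      case True
      then have ba: "b = a" using i by simp
      show False
      proof (cases g)
        case (Triv w)
        then have "src Q a = w" "tgt Q a = w" using pA by auto
        then have "(Arr [a], g) \<in> LA" using Triv pA(1) Z(2) ba by (auto simp: LA_def)
        then show False using nL by blast
      next
        case (Arr m)
        have "Arr (m @ [c]) \<in> BA" using i(3) True Arr by (simp add: splice_2 basis_arr)
        moreover have "m \<noteq> []" using pA(2) Arr BA_arr by blast
        ultimately have "tgt Q c = src Q (last m)" using BA_snoc by blast
        then show False using pA(3) Arr ba Z(3) by simp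
      qed
    next
      case False
      then have i1: "i = Suc 0" using i by simp
      then have ca: "c = a" using i by simp
      show False
      proof (cases g)
        case (Triv w)
        then have "src Q a = w" "tgt Q a = w" using pA by auto
        then have "(Arr [a], g) \<in> LA" using Triv pA(1) Z(1) ca by (auto simp: LA_def)
        then show False using nL by blast
      next
        case (Arr m)
        have "Arr (b # m) \<in> BA" using i(3) i1 Arr by (simp add: splice_2 basis_arr)
        moreover have "m \<noteq> []" using pA(2) Arr BA_arr by blast
        ultimately have "src Q b = tgt Q (hd m)" using BA_cons by blast
        then show False using pA(4) Arr ca Z(3) by simp
      qed
    qed
  qed
  have "repl QB ZB a g (Arr [b, c]) = (\<Sum>i\<in>{i. i < length [b, c] \<and> [b, c] ! i = a \<and> splice [b, c] i g \<in> BB}. vind (splice [b, c] i g))"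
    by (simp only: repl_def qpath.case)
  also have "\<dots> = 0" unfolding E by simp
  finally show ?thesis .
qed

lemma d1b_eq:
  assumes p: "p \<in> P1A - LA"
  shows "delta1_b QB ZB p = (delta1_b Q Z p :: _ \<Rightarrow> 'k::comm_ring_1)"
proof -
  obtain a g where ag: "p = (Arr [a], g)" "a \<in> arrs Q" "g \<in> BA" "src Q a = psrc Q g" "tgt Q a = ptgt Q g"
    using p by (metis DiffD1 P1A_iff surj_pair)
  have gn: "g \<noteq> Triv en"
  proof
    assume "g = Triv en"
    then have "p \<in> LA" using ag by (auto simp: LA_def)
    then show False using p by blast
  qed
  show ?thesis
  proof (rule ext, clarify)
    fix r y
    show "delta1_b QB ZB p (r, y) = (delta1_b Q Z p (r, y) :: 'k)"
    proof (cases "r \<in> Arr ` Z")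
      case True
      then have "r \<in> Arr ` ZB" by (auto simp: glueZ_def)
      then show ?thesis using True ag(1) repl_eq_B[OF gn, of a r, THEN fun_cong, of y] by (simp add: d1b_apply)
    next
      case False
      show ?thesis
      proof (cases "r \<in> Arr ` ZN")
        case True
        then obtain b c where bc: "r = Arr [b, c]" "[b, c] \<in> ZN" using ZN_form by blast
        have z: "(repl QB ZB a g (Arr [b, c]) :: _ \<Rightarrow> 'k) = 0"
          using ZN_repl_zero[of a g b c] p ag(1) bc(2) by blast
        show ?thesis using False ag(1) z bc
          by (simp add: d1b_apply glueZ_def)
      next
        case False2: False
        then show ?thesis using False ag(1) by (simp add: d1b_apply glueZ_def image_Un)
      qed
    qed
  qed
qed

lemma apath_replicate: "a \<in> arrs Q \<Longrightarrow> src Q a = tgt Q a \<Longrightarrow> is_apath Q (replicate (Suc n) a)"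
  by (induction n) (auto simp: is_apath_Cons)

lemma loop_power:
  assumes "a \<in> arrs Q" "src Q a = tgt Q a"
  shows "\<exists>m\<ge>2. replicate m a \<in> Z"
proof -
  have "\<exists>n. Arr (replicate (Suc n) a) \<notin> BA"
  proof (rule ccontr)
    assume "\<not> ?thesis"
    then have "range (\<lambda>n. Arr (replicate (Suc n) a) :: ('v,'a) qpath) \<subseteq> BA" by auto
    moreover have "inj (\<lambda>n. Arr (replicate (Suc n) a) :: ('v,'a) qpath)"
      by (rule injI) simp
    ultimately show False using finBA
      by (metis finite_imageD finite_subset infinite_UNIV_char_0)
  qed
  then obtain n where "Arr (replicate (Suc n) a) \<notin> BA" by blast
  then obtain z where z: "z \<in> Z" "subpath z (replicate (Suc n) a)"
    using apath_replicate[OF assms] by (auto simp: pbasis_def)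
  then have "z = replicate (length z) a" using subpath_replicate[OF z(2)] by blast
  moreover have "length z \<ge> 2" using Zp(2)[OF z(1)] .
  ultimately show ?thesis using z(1) by metis
qed

lemma pow_basis:
  assumes "a \<in> arrs Q" "src Q a = tgt Q a" "replicate m a \<in> Z" "m \<ge> 2"
  shows "Arr (replicate (m - 1) a) \<in> BA"
proof -
  have k: "m - 1 = Suc (m - 2)" using assms(4) by arith
  have ap: "is_apath Q (replicate (m - 1) a)" using apath_replicate[OF assms(1,2)] k by simp
  have "\<not> (\<exists>z\<in>Z. subpath z (replicate (m - 1) a))"
  proof
    assume "\<exists>z\<in>Z. subpath z (replicate (m - 1) a)"
    then obtain z where z: "z \<in> Z" "subpath z (replicate (m - 1) a)" by blast
    have "subpath z (replicate m a)"
      using subpath_trans[OF z(2) subpath_replicate2[of "m - 1" m a]] by simp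
    then have "z = replicate m a" using Zmin[OF assms(3) z(1)] by blast
    then show False using subpath_length[OF z(2)] assms(4) by simp
  qed
  then show ?thesis using ap by (simp add: pbasis_def)
qed

lemma take_drop_replicate:
  "i < m \<Longrightarrow> take i (replicate m a) @ drop (Suc i) (replicate m a) = replicate (m - 1) a"
  by (simp add: take_replicate drop_replicate replicate_add[symmetric])

lemma Ker_A_vanish:
  assumes charok: "\<forall>\<alpha>\<in>arrs Q. src Q \<alpha> = tgt Q \<alpha> \<and> src Q \<alpha> \<in> {e1, en} \<longrightarrow>
           (\<forall>m::nat. m \<ge> 2 \<and> replicate m \<alpha> \<in> Z \<longrightarrow> \<not> CHAR('k::field) dvd m)"
  shows "(Ker1 Q Z :: (_ \<Rightarrow> 'k) set) \<subseteq> vanish LA"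
proof
  fix f :: "_ \<Rightarrow> 'k" assume f: "f \<in> Ker1 Q Z"
  show "f \<in> vanish LA"
    unfolding vanish_def
  proof (intro CollectI ballI)
    fix p0 assume "p0 \<in> LA"
    then obtain a v where av: "p0 = (Arr [a], Triv v)" "a \<in> arrs Q" "src Q a = v" "tgt Q a = v" "v \<in> {e1, en}"
      by (auto simp: LA_def)
    obtain m where m: "m \<ge> 2" "replicate m a \<in> Z" using loop_power[OF av(2)] av by auto
    have cm: "(of_nat m :: 'k) \<noteq> 0"
      using charok av m by (simp add: of_nat_eq_0_iff_char_dvd)
    have pb: "Arr (replicate (m - 1) a) \<in> BA" using pow_basis[OF av(2) _ m(2,1)] av by simp
    let ?c = "(Arr (replicate m a), Arr (replicate (m - 1) a)) :: ('v,'a) qpath \<times> ('v,'a) qpath"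
    have p0A: "p0 \<in> P1A" using LA_sub \<open>p0 \<in> LA\<close> by blast
    have h: "delta1_b Q Z p ?c = (if p = p0 then of_nat m else (0::'k))" if p: "p \<in> P1A" for p
    proof -
      obtain b g where bg: "p = (Arr [b], g)" "b \<in> arrs Q" "g \<in> BA" "src Q b = psrc Q g" "tgt Q b = ptgt Q g"
        using p by (metis P1A_iff surj_pair)
      have val: "delta1_b Q Z p ?c = of_nat (card {i. i < m \<and> replicate m a ! i = b \<and>
            splice (replicate m a) i g \<in> BA \<and> splice (replicate m a) i g = Arr (replicate (m - 1) a)})"
        using m(2) bg(1) by (simp add: d1b_apply repl_Arr_apply)
      show ?thesis
      proof (cases "b = a")
        case False
        then have E: "{i. i < m \<and> replicate m a ! i = b \<and> splice (replicate m a) i g \<in> BA \<and>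
            splice (replicate m a) i g = Arr (replicate (m - 1) a)} = {}" by auto
        moreover have "p \<noteq> p0" using False bg(1) av(1) by auto
        ultimately show ?thesis unfolding val E by simp
      next
        case True
        show ?thesis
        proof (cases g)
          case (Arr l)
          have "l \<noteq> []" using bg(3) Arr BA_arr by blast
          have E: "{i. i < m \<and> replicate m a ! i = b \<and> splice (replicate m a) i g \<in> BA \<and>
            splice (replicate m a) i g = Arr (replicate (m - 1) a)} = {}"
          proof (rule ccontr)
            assume "\<not> ?thesis"
            then obtain i where "i < m" "splice (replicate m a) i g = Arr (replicate (m - 1) a)" by blast
            then have "length (take i (replicate m a) @ l @ drop (Suc i) (replicate m a)) = m - 1"
              using Arr by (simp add: splice_def)
            then show False using \<open>l \<noteq> []\<close> \<open>i < m\<close> by (cases l) auto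
          qed
          moreover have "p \<noteq> p0" using Arr bg(1) av(1) by auto
          ultimately show ?thesis unfolding val E by simp
        next
          case (Triv w)
          then have "w = v" using bg True av by simp
          then have pp: "p = p0" using bg(1) True Triv av(1) by simp
          have E: "{i. i < m \<and> replicate m a ! i = b \<and> splice (replicate m a) i g \<in> BA \<and>
            splice (replicate m a) i g = Arr (replicate (m - 1) a)} = {..<m}"
          proof -
            have "splice (replicate m a) i g = Arr (replicate (m - 1) a)" if "i < m" for i
              using that m(1) Triv take_drop_replicate[OF that, of a]
              by (simp add: splice_def)
            then show ?thesis using True pb by auto
          qed
          then show ?thesis using pp unfolding val E by simp
        qed
      qed
    qed
    have "delta1 Q Z f ?c = 0" using f by (simp add: Ker1_def)
    moreover have "delta1 Q Z f ?c = f p0 * of_nat m"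
      unfolding delta1_def lin_ext_apply
      by (rule sum_single[OF finP1A p0A]) (rule h)
    ultimately show "f p0 = 0" using cm by simp
  qed
qed

end


lemma subspace_Ker1: "FS.subspace (Ker1 Q Z :: (_ \<Rightarrow> 'k::field) set)"
proof -
  have S: "FS.subspace (spanned (par Q (Q1 Q) (pbasis Q Z)) :: (_ \<Rightarrow> 'k) set)" by (rule subspace_spanned)
  show ?thesis
    unfolding FS.subspace_def Ker1_def delta1_def
  proof (intro conjI ballI allI)
    show "0 \<in> {f \<in> spanned (par Q (Q1 Q) (pbasis Q Z)). lin_ext (par Q (Q1 Q) (pbasis Q Z)) (delta1_b Q Z) f = (0 :: _ \<Rightarrow> 'k)}"
      using S lin_ext_zero by (auto simp: FS.subspace_def)
  next
    fix x y assume "x \<in> {f \<in> spanned (par Q (Q1 Q) (pbasis Q Z)). lin_ext (par Q (Q1 Q) (pbasis Q Z)) (delta1_b Q Z) f = (0 :: _ \<Rightarrow> 'k)}"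
      "y \<in> {f \<in> spanned (par Q (Q1 Q) (pbasis Q Z)). lin_ext (par Q (Q1 Q) (pbasis Q Z)) (delta1_b Q Z) f = (0 :: _ \<Rightarrow> 'k)}"
    then show "x + y \<in> {f \<in> spanned (par Q (Q1 Q) (pbasis Q Z)). lin_ext (par Q (Q1 Q) (pbasis Q Z)) (delta1_b Q Z) f = (0 :: _ \<Rightarrow> 'k)}"
      using S lin_ext_add[of "par Q (Q1 Q) (pbasis Q Z)" "delta1_b Q Z" x y] by (auto simp: FS.subspace_def)
  next
    fix c x assume xK: "x \<in> {f \<in> spanned (par Q (Q1 Q) (pbasis Q Z)). lin_ext (par Q (Q1 Q) (pbasis Q Z)) (delta1_b Q Z) f = (0 :: _ \<Rightarrow> 'k)}"
    show "fscale c x \<in> {f \<in> spanned (par Q (Q1 Q) (pbasis Q Z)). lin_ext (par Q (Q1 Q) (pbasis Q Z)) (delta1_b Q Z) f = (0 :: _ \<Rightarrow> 'k)}"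
    proof -
      have "lin_ext (par Q (Q1 Q) (pbasis Q Z)) (delta1_b Q Z) (fscale c x) = fscale c (lin_ext (par Q (Q1 Q) (pbasis Q Z)) (delta1_b Q Z) x)"
        by (rule lin_ext_scale)
      also have "\<dots> = (0 :: _ \<Rightarrow> 'k)" using xK by (auto simp: fun_eq_iff)
      finally show ?thesis using xK S by (auto simp: FS.subspace_def)
    qed
  qed
qed

lemma set2: "{i. i < length [s, t] \<and> P i} = (if P 0 then {0} else {}) \<union> (if P 1 then {1} else {})"
proof (rule set_eqI)
  fix i
  show "i \<in> {i. i < length [s, t] \<and> P i} \<longleftrightarrow> i \<in> (if P 0 then {0} else {}) \<union> (if P 1 then {1} else {})"
  proof (cases "i = 0")
    case True then show ?thesis by auto
  next
    case False
    then show ?thesis by (cases "i = 1") auto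
  qed
qed

lemma lin_ext_in_subspace:
  assumes "FS.subspace S" "\<And>p. p \<in> P \<Longrightarrow> T p \<in> S"
  shows "lin_ext P T f \<in> (S :: ('z \<Rightarrow> 'k::field) set)"
  unfolding lin_ext_def using assms
  by (intro FS.subspace_sum) (auto intro: FS.subspace_scale)

context GS begin

lemma Ker_B_vanish: "(Ker1 QB ZB :: (_ \<Rightarrow> 'k::field) set) \<subseteq> vanish LB"
proof
  fix f :: "_ \<Rightarrow> 'k" assume f: "f \<in> Ker1 QB ZB"
  show "f \<in> vanish LB"
    unfolding vanish_def
  proof (intro CollectI ballI)
    fix p0 assume p0L: "p0 \<in> LB"
    then obtain a where a: "p0 = (Arr [a], Triv e1)" "a \<in> arrs Q" "src Q a = tgt Q a" "src Q a \<in> {e1, en}"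
      by (auto simp: LB_def)
    have p0B: "p0 \<in> P1B" using LB_sub p0L by blast
    define w where "w = (if src Q a = e1 then en else e1)"
    have w: "w \<in> {e1, en}" "w \<noteq> src Q a" using a(4) ne by (auto simp: w_def)
    have "non_isolated Q w" using ni1 nin w_def by auto
    then obtain b where b: "b \<in> arrs Q" "src Q b = w \<or> tgt Q b = w" by (auto simp: non_isolated_def)
    have ba: "b \<noteq> a" using b(2) w(2) a(3) by auto
    have bB: "Arr [b] \<in> BB" using b(1) by (simp add: basis_arr BA_single)
    have triv_p0: "p = p0" if "p \<in> P1B" "p = (Arr [a], Triv u)" for p u
    proof -
      have "Triv u \<in> BB" "gm (src Q a) = gm u" using that P1B_iff by auto
      moreover have "gm (src Q a) = e1" using a(4) by (auto simp: glue_map_def)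
      ultimately have "u = e1" by (auto simp: basis_triv_B glue_map_def split: if_splits)
      then show ?thesis using that a(1) by simp
    qed
    obtain r where r: "r \<in> ZN" "\<And>p. p \<in> P1B \<Longrightarrow> delta1_b QB ZB p (Arr r, Arr [b]) = (if p = p0 then 1 else (0::'k))"
    proof (cases "tgt Q b = w")
      case True
      have rZ: "[a, b] \<in> ZN" using ZN_iff a b True w by auto
      have "delta1_b QB ZB p (Arr [a, b], Arr [b]) = (if p = p0 then 1 else (0::'k))" if p: "p \<in> P1B" for p
      proof -
        obtain x g where xg: "p = (Arr [x], g)" "x \<in> arrs Q" "g \<in> BB" by (metis P1B_iff p surj_pair)
        have gne: "g = Arr m \<Longrightarrow> m \<noteq> []" for m using xg(3) BA_arr basis_arr by blast
        have val: "delta1_b QB ZB p (Arr [a, b], Arr [b]) = of_nat (card {i. i < length [a, b] \<and> [a, b] ! i = x \<and> splice [a, b] i g \<in> BB \<and> splice [a, b] i g = Arr [b]})"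
          using rZ xg(1) by (simp add: d1b_apply repl_Arr_apply glueZ_def)
        have n1: "\<not> ([a, b] ! 1 = x \<and> splice [a, b] 1 g = Arr [b])"
          using ba by (cases g) (auto simp: splice_2)
        have z0: "([a, b] ! 0 = x \<and> splice [a, b] 0 g \<in> BB \<and> splice [a, b] 0 g = Arr [b]) \<longleftrightarrow> p = p0"
        proof
          assume H: "[a, b] ! 0 = x \<and> splice [a, b] 0 g \<in> BB \<and> splice [a, b] 0 g = Arr [b]"
          then obtain u where "g = Triv u" using gne by (cases g) (auto simp: splice_2)
          then show "p = p0" using triv_p0[OF p] xg(1) H by simp
        next
          assume "p = p0"
          then show "[a, b] ! 0 = x \<and> splice [a, b] 0 g \<in> BB \<and> splice [a, b] 0 g = Arr [b]"
            using xg(1) a(1) bB by (simp add: splice_2)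
        qed
        have E: "{i. i < length [a, b] \<and> [a, b] ! i = x \<and> splice [a, b] i g \<in> BB \<and> splice [a, b] i g = Arr [b]}
            = (if p = p0 then {0} else {})"
          unfolding set2 using n1 z0 by auto
        show ?thesis unfolding val E by (cases "p = p0") simp_all
      qed
      then show ?thesis using that rZ by blast
    next
      case False
      then have sb: "src Q b = w" using b(2) by blast
      have rZ: "[b, a] \<in> ZN" using ZN_iff a b sb w by auto
      have "delta1_b QB ZB p (Arr [b, a], Arr [b]) = (if p = p0 then 1 else (0::'k))" if p: "p \<in> P1B" for p
      proof -
        obtain x g where xg: "p = (Arr [x], g)" "x \<in> arrs Q" "g \<in> BB" by (metis P1B_iff p surj_pair)
        have gne: "g = Arr m \<Longrightarrow> m \<noteq> []" for m using xg(3) BA_arr basis_arr by blast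
        have val: "delta1_b QB ZB p (Arr [b, a], Arr [b]) = of_nat (card {i. i < length [b, a] \<and> [b, a] ! i = x \<and> splice [b, a] i g \<in> BB \<and> splice [b, a] i g = Arr [b]})"
          using rZ xg(1) by (simp add: d1b_apply repl_Arr_apply glueZ_def)
        have n0: "\<not> ([b, a] ! 0 = x \<and> splice [b, a] 0 g = Arr [b])"
          using ba gne by (cases g) (auto simp: splice_2)
        have z1: "([b, a] ! 1 = x \<and> splice [b, a] 1 g \<in> BB \<and> splice [b, a] 1 g = Arr [b]) \<longleftrightarrow> p = p0"
        proof
          assume H: "[b, a] ! 1 = x \<and> splice [b, a] 1 g \<in> BB \<and> splice [b, a] 1 g = Arr [b]"
          then obtain u where "g = Triv u" using gne by (cases g) (auto simp: splice_2)
          then show "p = p0" using triv_p0[OF p] xg(1) H by simp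
        next
          assume "p = p0"
          then show "[b, a] ! 1 = x \<and> splice [b, a] 1 g \<in> BB \<and> splice [b, a] 1 g = Arr [b]"
            using xg(1) a(1) bB by (simp add: splice_2)
        qed
        have E: "{i. i < length [b, a] \<and> [b, a] ! i = x \<and> splice [b, a] i g \<in> BB \<and> splice [b, a] i g = Arr [b]}
            = (if p = p0 then {1} else {})"
          unfolding set2 using n0 z1 by auto
        show ?thesis unfolding val E by (cases "p = p0") simp_all
      qed
      then show ?thesis using that rZ by blast
    qed
    have "delta1 QB ZB f (Arr r, Arr [b]) = 0" using f by (simp add: Ker1_def)
    moreover have "delta1 QB ZB f (Arr r, Arr [b]) = f p0 * 1"
      unfolding delta1_def lin_ext_apply
      by (rule sum_single[OF finP1B p0B]) (rule r(2))
    ultimately show "f p0 = 0" by simp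
  qed
qed

definition GG :: "(('v,'a) qpath \<times> ('v,'a) qpath) set" where
  "GG = {(r, y). r \<in> Arr ` Z \<and> psrc Q r = psrc Q y \<and> ptgt Q r = ptgt Q y}"

lemma l_decomp:
  assumes "is_apath Q l" "i < length l"
  defines "u \<equiv> take i l" and "v \<equiv> drop (Suc i) l"
  shows "l = u @ [l ! i] @ v"
    "u \<noteq> [] \<Longrightarrow> src Q (last u) = tgt Q (l ! i)"
    "v \<noteq> [] \<Longrightarrow> src Q (l ! i) = tgt Q (hd v)"
    "src Q (last l) = (if v = [] then src Q (l ! i) else src Q (last v))"
    "tgt Q (hd l) = (if u = [] then tgt Q (l ! i) else tgt Q (hd u))"
proof -
  show l: "l = u @ [l ! i] @ v" unfolding u_def v_def using id_take_nth_drop[OF assms(2)] by simp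
  have av: "is_apath Q (l ! i # v)"
  proof (cases "u = []")
    case True then show ?thesis using l assms(1) by simp
  next
    case False then show ?thesis using l assms(1) is_apath_append[of u "l ! i # v" Q] by simp
  qed
  show "u \<noteq> [] \<Longrightarrow> src Q (last u) = tgt Q (l ! i)"
    using l assms(1) is_apath_append[of u "l ! i # v" Q] by simp
  show "v \<noteq> [] \<Longrightarrow> src Q (l ! i) = tgt Q (hd v)"
    using av by (simp add: is_apath_Cons)
  have H1: "last (u @ [l ! i] @ v) = (if v = [] then l ! i else last v)" by simp
  show "src Q (last l) = (if v = [] then src Q (l ! i) else src Q (last v))"
    using H1 unfolding l[symmetric] by simp
  have H2: "hd (u @ [l ! i] @ v) = (if u = [] then l ! i else hd u)" by (cases u) auto
  show "tgt Q (hd l) = (if u = [] then tgt Q (l ! i) else tgt Q (hd u))"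
    using H2 unfolding l[symmetric] by simp
qed

lemma G1:
  assumes p: "p \<in> P1A"
  shows "(delta1_b Q Z p :: _ \<Rightarrow> 'k::field) \<in> vanish (- GG)"
  unfolding vanish_def
proof (intro CollectI ballI)
  fix q assume q: "q \<in> - GG"
  obtain r y where q2: "q = (r, y)" by (cases q)
  obtain a g where ag: "p = (Arr [a], g)" "a \<in> arrs Q" "g \<in> BA" "src Q a = psrc Q g" "tgt Q a = ptgt Q g"
    using p by (metis P1A_iff surj_pair)
  show "(delta1_b Q Z p q :: 'k) = 0"
  proof (rule ccontr)
    assume nz: "(delta1_b Q Z p q :: 'k) \<noteq> 0"
    then have rZ: "r \<in> Arr ` Z" using q2 ag(1) by (auto simp: d1b_apply split: if_splits)
    then obtain l where l: "r = Arr l" "l \<in> Z" by blast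
    have "(delta1_b Q Z p q :: 'k) = repl Q Z a g (Arr l) y"
      using rZ by (simp only: q2 ag(1) l(1) d1b_apply if_P arrow_of_single)
    then have "(repl Q Z a g (Arr l) y :: 'k) \<noteq> 0" using nz by simp
    from repl_nz[OF this] obtain i where i: "i < length l" "l ! i = a" "splice l i g = y" by blast
    have ap: "is_apath Q l" using Zp(1)[OF l(2)] .
    have len: "length l \<ge> 2" using Zp(2)[OF l(2)] .
    define u where "u = take i l"
    define v where "v = drop (Suc i) l"
    note D = l_decomp[OF ap i(1), folded u_def v_def, unfolded i(2)]
    have uv: "u @ v \<noteq> []" using D(1) len by (cases u; cases v) auto
    have par: "psrc Q y = src Q (last l) \<and> ptgt Q y = tgt Q (hd l)"
    proof (cases g)
      case (Triv w)
      have "splice l i g = Arr (u @ v)"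
        unfolding splice_def Triv qpath.case u_def[symmetric] v_def[symmetric] using uv by simp
      then have y: "y = Arr (u @ v)" using i(3) by simp
      have lw: "src Q a = tgt Q a" using ag Triv by simp
      show ?thesis using y D(2-5) lw uv by (cases "u = []"; cases "v = []") auto
    next
      case (Arr m)
      have m: "m \<noteq> []" using ag(3) Arr BA_arr by blast
      have y: "y = Arr (u @ m @ v)" using i(3) Arr by (simp add: splice_def u_def v_def)
      show ?thesis using y D(4,5) m ag(4,5) Arr by (cases "u = []"; cases "v = []") auto
    qed
    then have "q \<in> GG" using q2 l by (auto simp: GG_def)
    then show False using q by blast
  qed
qed

lemma G2:
  assumes p: "p \<in> SP"
  shows "(delta1_b QB ZB p :: _ \<Rightarrow> 'k::field) \<in> vanish GG"
  unfolding vanish_def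
proof (intro CollectI ballI)
  fix q assume q: "q \<in> GG"
  then obtain l y where q2: "q = (Arr l, y)" "l \<in> Z" "psrc Q (Arr l) = psrc Q y" "ptgt Q (Arr l) = ptgt Q y"
    by (auto simp: GG_def)
  have pB: "p \<in> P1B" "p \<notin> LB" "p \<notin> P1A" using p by (auto simp: SP_def)
  obtain a g where ag: "p = (Arr [a], g)" "a \<in> arrs Q" "g \<in> BB" "gm (src Q a) = gm (psrc Q g)" "gm (tgt Q a) = gm (ptgt Q g)"
    using pB(1) by (metis P1B_iff surj_pair)
  have gA: "g \<in> BA" using ag(3) BB_eq by blast
  have npar: "\<not> (src Q a = psrc Q g \<and> tgt Q a = ptgt Q g)" using pB(3) ag gA by (auto simp: P1A_iff)
  show "(delta1_b QB ZB p q :: 'k) = 0"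
  proof (rule ccontr)
    assume nz: "(delta1_b QB ZB p q :: 'k) \<noteq> 0"
    have lZB: "Arr l \<in> Arr ` ZB" using q2(2) by (auto simp: glueZ_def)
    have "(delta1_b QB ZB p q :: 'k) = repl QB ZB a g (Arr l) y"
      by (simp only: q2(1) ag(1) d1b_apply if_P[OF lZB] arrow_of_single)
    then have "(repl QB ZB a g (Arr l) y :: 'k) \<noteq> 0" using nz by simp
    from repl_nz[OF this] obtain i where i: "i < length l" "l ! i = a" "splice l i g = y" "y \<in> BB" by blast
    have ap: "is_apath Q l" using Zp(1)[OF q2(2)] .
    have len: "length l \<ge> 2" using Zp(2)[OF q2(2)] .
    define u where "u = take i l"
    define v where "v = drop (Suc i) l"
    note D = l_decomp[OF ap i(1), folded u_def v_def, unfolded i(2)]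
    have uv: "u @ v \<noteq> []" using D(1) len by (cases u; cases v) auto
    show False
    proof (cases g)
      case (Arr m)
      have m: "m \<noteq> []" using gA Arr BA_arr by blast
      have y: "y = Arr (u @ m @ v)" using i(3) Arr by (simp add: splice_def u_def v_def)
      have yA: "is_apath Q (u @ m @ v)" using i(4) y basis_arr BA_arr by metis
      have j1: "u \<noteq> [] \<Longrightarrow> src Q (last u) = tgt Q (hd m)"
        using yA m is_apath_append[of u "m @ v" Q] by simp
      have j2: "v \<noteq> [] \<Longrightarrow> src Q (last m) = tgt Q (hd v)"
      proof -
        assume "v \<noteq> []"
        have "is_apath Q (m @ v)" using yA m is_apath_append[of u "m @ v" Q] by (cases "u = []") auto
        then show ?thesis using \<open>v \<noteq> []\<close> m is_apath_append[of m v Q] by simp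
      qed
      have "src Q a = src Q (last m) \<and> tgt Q a = tgt Q (hd m)"
        using D(2-5) j1 j2 q2(3,4) y m uv by (cases "u = []"; cases "v = []") auto
      then show False using npar Arr by simp
    next
      case (Triv w)
      have "splice l i g = Arr (u @ v)"
        unfolding splice_def Triv qpath.case u_def[symmetric] v_def[symmetric] using uv by simp
      then have y: "y = Arr (u @ v)" using i(3) by simp
      have yA: "is_apath Q (u @ v)" using i(4) y basis_arr BA_arr by metis
      have j: "u \<noteq> [] \<Longrightarrow> v \<noteq> [] \<Longrightarrow> src Q (last u) = tgt Q (hd v)"
        using yA is_apath_append[of u v Q] by simp
      have loop: "src Q a = tgt Q a"
        using D(2-5) j q2(3,4) y uv by (cases "u = []"; cases "v = []") auto
      have wB: "w \<in> verts Q" "w \<noteq> en" using ag(3) Triv basis_triv_B by auto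
      have gw: "gm (src Q a) = w" using ag(4) Triv wB(2) by simp
      have "src Q a \<noteq> w" using npar Triv loop by auto
      then have "src Q a = en" "w = e1" using gw by (auto simp: glue_map_def split: if_splits)
      then have "p \<in> LB" using ag(1,2) Triv loop by (auto simp: LB_def)
      then show False using pB(2) by blast
    qed
  qed
qed

end


context GS begin

lemma spanned_mono: "P \<subseteq> P' \<Longrightarrow> spanned P \<subseteq> spanned P'"
  by (auto simp: spanned_def)

lemma d1_AB:
  assumes f: "(f :: _ \<Rightarrow> 'k::field) \<in> spanned (P1A - LA)"
  shows "delta1 QB ZB f = delta1 Q Z f"
proof -
  have "delta1 QB ZB f = lin_ext P1B (delta1_b QB ZB) f" by (simp add: delta1_def)
  also have "\<dots> = lin_ext (P1A - LA) (delta1_b QB ZB) f"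
    using P1A_LA_sub f by (intro lin_ext_restrict finP1B) (auto simp: spanned_def)
  also have "\<dots> = lin_ext (P1A - LA) (delta1_b Q Z) f"
    by (rule lin_ext_cong) (rule d1b_eq)
  also have "\<dots> = lin_ext P1A (delta1_b Q Z) f"
    using f by (intro lin_ext_restrict[symmetric] finP1A) (auto simp: spanned_def)
  finally show ?thesis by (simp add: delta1_def)
qed

lemma KerA_sub:
  assumes charok: "\<forall>\<alpha>\<in>arrs Q. src Q \<alpha> = tgt Q \<alpha> \<and> src Q \<alpha> \<in> {e1, en} \<longrightarrow>
           (\<forall>m::nat. m \<ge> 2 \<and> replicate m \<alpha> \<in> Z \<longrightarrow> \<not> CHAR('k::field) dvd m)"
    and f: "(f :: _ \<Rightarrow> 'k) \<in> Ker1 Q Z"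
  shows "f \<in> spanned (P1A - LA)" "f \<in> Ker1 QB ZB"
proof -
  have "f \<in> vanish LA" using Ker_A_vanish[OF charok] f by blast
  moreover have "f \<in> spanned P1A" using f by (simp add: Ker1_def)
  ultimately show fs: "f \<in> spanned (P1A - LA)" by (auto simp: spanned_def vanish_def)
  have "f \<in> spanned P1B" using spanned_mono[OF P1A_LA_sub] spanned_mono[of "P1B - LB" P1B] fs by blast
  moreover have "delta1 QB ZB f = 0" using d1_AB[OF fs] f by (simp add: Ker1_def)
  ultimately show "f \<in> Ker1 QB ZB" by (simp add: Ker1_def)
qed

lemma vanish_lin_ext:
  assumes "\<And>p. p \<in> P \<Longrightarrow> T p \<in> vanish G"
  shows "lin_ext P T f \<in> (vanish G :: (_ \<Rightarrow> 'k::field) set)"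
  by (rule lin_ext_in_subspace[OF subspace_vanish assms])

lemma Ker_B_split:
  assumes f: "(f :: _ \<Rightarrow> 'k::field) \<in> Ker1 QB ZB"
  obtains f1 f2 where "f = f1 + f2" "f1 \<in> Ker1 Q Z" "f2 \<in> Ker1 QB ZB \<inter> spanned SP"
proof -
  define f1 where "f1 = (\<lambda>q. if q \<in> P1A - LA then f q else 0)"
  define f2 where "f2 = (\<lambda>q. if q \<in> SP then f q else 0)"
  have fB: "f \<in> spanned P1B" "delta1 QB ZB f = 0" using f by (auto simp: Ker1_def)
  have fL: "f \<in> vanish LB" using Ker_B_vanish f by blast
  have sum: "f = f1 + f2"
  proof
    fix q
    show "f q = (f1 + f2) q"
    proof (cases "q \<in> P1B - LB")
      case True
      then show ?thesis using P1B_LB SP_disj by (auto simp: f1_def f2_def)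
    next
      case False
      then have "f q = 0" using fB(1) fL by (cases q) (auto simp: spanned_def vanish_def)
      moreover have "q \<notin> P1A - LA" "q \<notin> SP" using False P1B_LB by auto
      ultimately show ?thesis by (simp add: f1_def f2_def)
    qed
  qed
  have f1s: "f1 \<in> spanned (P1A - LA)" by (simp add: f1_def spanned_def)
  have f2s: "f2 \<in> spanned SP" by (simp add: f2_def spanned_def)
  have f2B: "f2 \<in> spanned P1B" using f2s SP_sub spanned_mono by blast
  have d: "delta1 QB ZB f = delta1 Q Z f1 + delta1 QB ZB f2"
    using sum d1_AB[OF f1s] by (simp add: delta1_def lin_ext_add)
  have v1: "delta1 Q Z f1 \<in> (vanish (- GG) :: (_ \<Rightarrow> 'k) set)"
    unfolding delta1_def by (rule vanish_lin_ext) (rule G1)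
  have "delta1 QB ZB f2 = lin_ext SP (delta1_b QB ZB) f2"
    unfolding delta1_def using SP_sub f2s by (intro lin_ext_restrict finP1B) (auto simp: spanned_def)
  moreover have "lin_ext SP (delta1_b QB ZB) f2 \<in> (vanish GG :: (_ \<Rightarrow> 'k) set)"
    by (rule vanish_lin_ext) (rule G2)
  ultimately have v2: "delta1 QB ZB f2 \<in> (vanish GG :: (_ \<Rightarrow> 'k) set)" by simp
  have z: "delta1 Q Z f1 + delta1 QB ZB f2 = 0" using d fB(2) by simp
  have z1: "delta1 Q Z f1 = 0"
  proof
    fix q
    show "delta1 Q Z f1 q = 0 q"
    proof (cases "q \<in> GG")
      case True
      then have "delta1 QB ZB f2 q = 0" using v2 by (auto simp: vanish_def)
      moreover have "delta1 Q Z f1 q + delta1 QB ZB f2 q = 0" using fun_cong[OF z, of q] by simp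
      ultimately show ?thesis by simp
    next
      case False then show ?thesis using v1 by (auto simp: vanish_def)
    qed
  qed
  then have z2: "delta1 QB ZB f2 = 0" using z by simp
  have "f1 \<in> Ker1 Q Z"
    using z1 f1s spanned_mono[of "P1A - LA" P1A] by (auto simp: Ker1_def)
  moreover have "f2 \<in> Ker1 QB ZB \<inter> spanned SP" using z2 f2s f2B by (simp add: Ker1_def)
  ultimately show ?thesis using that sum by blast
qed

lemma Ker_dim:
  assumes charok: "\<forall>\<alpha>\<in>arrs Q. src Q \<alpha> = tgt Q \<alpha> \<and> src Q \<alpha> \<in> {e1, en} \<longrightarrow>
           (\<forall>m::nat. m \<ge> 2 \<and> replicate m \<alpha> \<in> Z \<longrightarrow> \<not> CHAR('k::field) dvd m)"
  shows "kdim (Ker1 QB ZB :: (_ \<Rightarrow> 'k) set) = kdim (Ker1 Q Z :: (_ \<Rightarrow> 'k) set) + kdim (Ker1 QB ZB \<inter> spanned SP :: (_ \<Rightarrow> 'k) set)"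
proof -
  let ?S = "Ker1 Q Z :: (_ \<Rightarrow> 'k) set"
  let ?T = "Ker1 QB ZB \<inter> spanned SP :: (_ \<Rightarrow> 'k) set"
  have eq: "Ker1 QB ZB = {x + y | x y. x \<in> ?S \<and> y \<in> ?T}"
  proof
    show "Ker1 QB ZB \<subseteq> {x + y | x y. x \<in> ?S \<and> y \<in> ?T}"
    proof
      fix f assume "f \<in> (Ker1 QB ZB :: (_ \<Rightarrow> 'k) set)"
      then obtain f1 f2 where "f = f1 + f2" "f1 \<in> ?S" "f2 \<in> ?T" using Ker_B_split by blast
      then show "f \<in> {x + y | x y. x \<in> ?S \<and> y \<in> ?T}" by blast
    qed
    show "{x + y | x y. x \<in> ?S \<and> y \<in> ?T} \<subseteq> Ker1 QB ZB"
    proof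
      fix f assume "f \<in> {x + y | x y. x \<in> ?S \<and> y \<in> ?T}"
      then obtain x y where xy: "f = x + y" "x \<in> ?S" "y \<in> ?T" by blast
      have "x \<in> Ker1 QB ZB" using KerA_sub(2)[OF charok xy(2)] .
      moreover have "y \<in> Ker1 QB ZB" using xy(3) by blast
      moreover have "FS.subspace (Ker1 QB ZB :: (_ \<Rightarrow> 'k) set)" by (rule subspace_Ker1)
      ultimately show "f \<in> Ker1 QB ZB" using xy(1) by (simp add: FS.subspace_add)
    qed
  qed
  have subS: "FS.subspace ?S" by (rule subspace_Ker1)
  have subT: "FS.subspace ?T" using subspace_Ker1 subspace_spanned by (rule FS.subspace_inter)
  have inter: "?S \<inter> ?T \<subseteq> {0}"
  proof
    fix x assume x: "x \<in> ?S \<inter> ?T"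
    then have "x \<in> spanned P1A" "x \<in> spanned SP" by (auto simp: Ker1_def)
    then have "x = 0" using SP_def by (auto simp: spanned_def fun_eq_iff)
    then show "x \<in> {0}" by simp
  qed
  have W: "spanned P1B = FS.span (vind ` P1B :: (_ \<Rightarrow> 'k) set)" by (rule spanned_eq_span[OF finP1B])
  have S1: "?S \<subseteq> FS.span (vind ` P1B)"
    using KerA_sub(2)[OF charok] W by (auto simp: Ker1_def)
  have T1: "?T \<subseteq> FS.span (vind ` P1B)" using W by (auto simp: Ker1_def)
  have "kdim (Ker1 QB ZB :: (_ \<Rightarrow> 'k) set) = FS.dim {x + y | x y. x \<in> ?S \<and> y \<in> ?T}"
    using eq by (simp add: kdim_def)
  also have "\<dots> = FS.dim ?S + FS.dim ?T"
    by (rule dim_direct[OF subS subT inter S1 T1]) (simp add: finP1B)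
  finally show ?thesis by (simp add: kdim_def)
qed

lemma Zspp_eq: "Zspp TYPE('k::field) Q Z e1 en = Ker1 QB ZB \<inter> spanned SP"
proof -
  have set: "{pt (Arr [\<alpha>]) (pstar e1 en p) | \<alpha> p. (\<alpha>, p) \<in> special_pairs Q Z e1 en}
     = (vind ` (SP \<union> LB) :: (_ \<Rightarrow> 'k) set)"
    unfolding special_pairs_set[symmetric] by (auto simp: pt_def)
  have fin: "finite (SP \<union> LB)" using SP_sub LB_sub finP1B finite_subset by blast
  have e: "spanned (SP \<union> LB) = FS.span (vind ` (SP \<union> LB) :: (_ \<Rightarrow> 'k) set)"
    by (rule spanned_eq_span[OF fin])
  have "kspan (vind ` (SP \<union> LB) :: (_ \<Rightarrow> 'k) set) = spanned (SP \<union> LB)"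
    unfolding kspan_def e ..
  then have Z: "Zspp TYPE('k) Q Z e1 en = Ker1 QB ZB \<inter> spanned (SP \<union> LB)"
    unfolding Zspp_def set by simp
  show ?thesis
    unfolding Z using Ker_B_vanish by (auto simp: spanned_def vanish_def)
qed

end


lemma pt_apply: "pt x y q = (if q = (x, y) then 1 else 0)"
  by (simp add: pt_def vind_def)

lemma sum_pt_nz:
  assumes "(\<Sum>a\<in>S. pt (f a) (g a) q :: 'k::comm_ring_1) \<noteq> 0"
  shows "\<exists>a\<in>S. q = (f a, g a)"
proof (rule ccontr)
  assume "\<not> ?thesis"
  then have "(\<Sum>a\<in>S. pt (f a) (g a) q :: 'k) = (\<Sum>a\<in>S. 0)" by (intro sum.cong) (auto simp: pt_apply)
  then show False using assms by simp
qed

lemma d0b_nz: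
  assumes "(delta0_b Q Z (e, \<gamma>) q :: 'k::comm_ring_1) \<noteq> 0"
  shows "\<exists>a\<in>arrs Q. (q = (Arr [a], pcomp (Arr [a]) \<gamma>) \<and> pcomp (Arr [a]) \<gamma> \<in> pbasis Q Z)
     \<or> (q = (Arr [a], pcomp \<gamma> (Arr [a])) \<and> pcomp \<gamma> (Arr [a]) \<in> pbasis Q Z)"
proof -
  let ?S1 = "{a\<in>arrs Q. src Q a = psrc Q e \<and> pcomp (Arr [a]) \<gamma> \<in> pbasis Q Z}"
  let ?S2 = "{a\<in>arrs Q. tgt Q a = psrc Q e \<and> pcomp \<gamma> (Arr [a]) \<in> pbasis Q Z}"
  have "(\<Sum>a\<in>?S1. pt (Arr [a]) (pcomp (Arr [a]) \<gamma>) q :: 'k) - (\<Sum>a\<in>?S2. pt (Arr [a]) (pcomp \<gamma> (Arr [a])) q) \<noteq> 0"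
    using assms by (simp add: delta0_b_def sum_fun_apply)
  then have "(\<Sum>a\<in>?S1. pt (Arr [a]) (pcomp (Arr [a]) \<gamma>) q :: 'k) \<noteq> 0 \<or> (\<Sum>a\<in>?S2. pt (Arr [a]) (pcomp \<gamma> (Arr [a])) q :: 'k) \<noteq> 0"
    by auto
  then show ?thesis
  proof
    assume "(\<Sum>a\<in>?S1. pt (Arr [a]) (pcomp (Arr [a]) \<gamma>) q :: 'k) \<noteq> 0"
    from sum_pt_nz[OF this] show ?thesis by blast
  next
    assume "(\<Sum>a\<in>?S2. pt (Arr [a]) (pcomp \<gamma> (Arr [a])) q :: 'k) \<noteq> 0"
    from sum_pt_nz[OF this] show ?thesis by blast
  qed
qed

context GS begin

abbreviation "P0A \<equiv> par Q (Q0 Q) BA"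
abbreviation "P0B \<equiv> par QB (Q0 QB) BB"

lemma P0A_iff: "(x, \<gamma>) \<in> P0A \<longleftrightarrow> (\<exists>v\<in>verts Q. x = Triv v \<and> \<gamma> \<in> BA \<and> psrc Q \<gamma> = v \<and> ptgt Q \<gamma> = v)"
  by (auto simp: par_def Q0_def)

lemma P0B_iff: "(x, \<gamma>) \<in> P0B \<longleftrightarrow> (\<exists>v\<in>verts Q - {en}. x = Triv v \<and> \<gamma> \<in> BB \<and> gm (psrc Q \<gamma>) = v \<and> gm (ptgt Q \<gamma>) = v)"
proof -
  have "(x, \<gamma>) \<in> P0B \<longleftrightarrow> (\<exists>v\<in>verts Q - {en}. x = Triv v \<and> \<gamma> \<in> BB \<and> psrc QB \<gamma> = v \<and> ptgt QB \<gamma> = v)"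
    by (auto simp: par_def Q0_def gmV)
  then show ?thesis using psrc_B ptgt_B by auto
qed

lemma finP0A: "finite P0A"
proof -
  have "P0A \<subseteq> Q0 Q \<times> BA" by (auto simp: par_def)
  moreover have "finite (Q0 Q)" using wf(1) by (simp add: Q0_def)
  ultimately show ?thesis using finBA finite_subset by blast
qed

lemma finP0B: "finite P0B"
proof -
  have "P0B \<subseteq> Q0 QB \<times> BB" by (auto simp: par_def)
  moreover have "finite (Q0 QB)" using wf(1) by (simp add: Q0_def)
  ultimately show ?thesis using finBB finite_subset by blast
qed

definition PuA :: "(('v,'a) qpath \<times> ('v,'a) qpath) set" where
  "PuA = {p \<in> P0A. \<exists>l. snd p = Arr l}"
definition PdA :: "(('v,'a) qpath \<times> ('v,'a) qpath) set" where
  "PdA = (\<lambda>v. (Triv v, Triv v)) ` verts Q"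
definition PdB :: "(('v,'a) qpath \<times> ('v,'a) qpath) set" where
  "PdB = (\<lambda>v. (Triv v, Triv v)) ` (verts Q - {en})"
definition PnB :: "(('v,'a) qpath \<times> ('v,'a) qpath) set" where
  "PnB = {(Triv e1, Arr l) | l. Arr l \<in> BA \<and> psrc Q (Arr l) \<noteq> ptgt Q (Arr l) \<and>
            psrc Q (Arr l) \<in> {e1, en} \<and> ptgt Q (Arr l) \<in> {e1, en}}"
definition ustar :: "('v,'a) qpath \<times> ('v,'a) qpath \<Rightarrow> ('v,'a) qpath \<times> ('v,'a) qpath" where
  "ustar p = (Triv (gm (psrc Q (snd p))), snd p)"

lemma PuA_E:
  assumes "p \<in> PuA"
  obtains v l where "p = (Triv v, Arr l)" "v \<in> verts Q" "Arr l \<in> BA" "psrc Q (Arr l) = v" "ptgt Q (Arr l) = v"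
proof -
  obtain x \<gamma> where xg: "p = (x, \<gamma>)" by (cases p)
  obtain l where l: "\<gamma> = Arr l" using assms xg by (auto simp: PuA_def)
  obtain v where "v \<in> verts Q" "x = Triv v" "\<gamma> \<in> BA" "psrc Q \<gamma> = v" "ptgt Q \<gamma> = v"
    using assms xg P0A_iff by (auto simp: PuA_def)
  then show ?thesis using that xg l by blast
qed

lemma P0A_split: "P0A = PuA \<union> PdA"
proof
  show "P0A \<subseteq> PuA \<union> PdA"
  proof
    fix p assume p: "p \<in> P0A"
    obtain x \<gamma> where xg: "p = (x, \<gamma>)" by (cases p)
    then obtain v where v: "v \<in> verts Q" "x = Triv v" "\<gamma> \<in> BA" "psrc Q \<gamma> = v" "ptgt Q \<gamma> = v"
      using p P0A_iff by blast
    show "p \<in> PuA \<union> PdA"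
    proof (cases \<gamma>)
      case (Triv w) then show ?thesis using v xg by (auto simp: PdA_def)
    next
      case (Arr l) then show ?thesis using p xg by (auto simp: PuA_def)
    qed
  qed
  show "PuA \<union> PdA \<subseteq> P0A"
    by (auto simp: PuA_def PdA_def P0A_iff basis_triv_A)
qed

lemma P0B_split: "P0B = ustar ` PuA \<union> PdB \<union> PnB"
proof
  show "P0B \<subseteq> ustar ` PuA \<union> PdB \<union> PnB"
  proof
    fix p assume p: "p \<in> P0B"
    obtain x \<gamma> where xg: "p = (x, \<gamma>)" by (cases p)
    then obtain v where v: "v \<in> verts Q - {en}" "x = Triv v" "\<gamma> \<in> BB" "gm (psrc Q \<gamma>) = v" "gm (ptgt Q \<gamma>) = v"
      using p P0B_iff by blast
    show "p \<in> ustar ` PuA \<union> PdB \<union> PnB"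
    proof (cases \<gamma>)
      case (Triv w)
      then have "w = v" using v basis_triv_B by auto
      then show ?thesis using v xg Triv by (auto simp: PdB_def)
    next
      case (Arr l)
      have lA: "Arr l \<in> BA" using v(3) Arr basis_arr by simp
      show ?thesis
      proof (cases "psrc Q (Arr l) = ptgt Q (Arr l)")
        case True
        have sV: "psrc Q (Arr l) \<in> verts Q" using lA BA_arr wf(3)
          by (metis apath_set last_in_set psrc.simps(2) subsetD)
        have "(Triv (psrc Q (Arr l)), Arr l) \<in> PuA" using True lA sV by (auto simp: PuA_def P0A_iff)
        moreover have "ustar (Triv (psrc Q (Arr l)), Arr l) = p" using xg v Arr by (simp add: ustar_def)
        ultimately show ?thesis by force
      next
        case False
        then have "psrc Q (Arr l) \<in> {e1, en}" "ptgt Q (Arr l) \<in> {e1, en}" "v = e1"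
          using v(4,5) Arr by (auto simp: glue_map_def split: if_splits)
        then show ?thesis using False lA xg v(2) Arr by (auto simp: PnB_def)
      qed
    qed
  qed
  show "ustar ` PuA \<union> PdB \<union> PnB \<subseteq> P0B"
  proof
    fix p assume "p \<in> ustar ` PuA \<union> PdB \<union> PnB"
    then consider (u) "p \<in> ustar ` PuA" | (d) "p \<in> PdB" | (n) "p \<in> PnB" by blast
    then show "p \<in> P0B"
    proof cases
      case u
      then obtain p0 where p0: "p0 \<in> PuA" "p = ustar p0" by blast
      then obtain v l where "p0 = (Triv v, Arr l)" using PuA_E by metis
      then have vl: "(Triv v, Arr l) \<in> PuA" "p = ustar (Triv v, Arr l)" using p0 by auto
      then have "v \<in> verts Q" "Arr l \<in> BA" "psrc Q (Arr l) = v" "ptgt Q (Arr l) = v"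
        by (auto simp: PuA_def P0A_iff)
      moreover have "gm v \<in> verts Q - {en}" using \<open>v \<in> verts Q\<close> gmV by blast
      ultimately show ?thesis using vl(2) by (auto simp: P0B_iff ustar_def basis_arr)
    next
      case d
      then obtain v where "p = (Triv v, Triv v)" "v \<in> verts Q" "v \<noteq> en" by (auto simp: PdB_def)
      then show ?thesis by (auto simp: P0B_iff basis_triv_B)
    next
      case n
      then obtain l where l: "p = (Triv e1, Arr l)" "Arr l \<in> BA" "psrc Q (Arr l) \<noteq> ptgt Q (Arr l)"
        "psrc Q (Arr l) \<in> {e1, en}" "ptgt Q (Arr l) \<in> {e1, en}" by (auto simp: PnB_def)
      have "gm (psrc Q (Arr l)) = e1" "gm (ptgt Q (Arr l)) = e1" using l(4,5) by (auto simp: glue_map_def)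
      then show ?thesis using l e1V ne by (auto simp: P0B_iff basis_arr)
    qed
  qed
qed

lemma d0b_U:
  assumes p: "p \<in> PuA"
  shows "delta0_b QB ZB (ustar p) = delta0_b Q Z p"
proof -
  obtain v l where vl: "p = (Triv v, Arr l)" "v \<in> verts Q" "Arr l \<in> BA" "psrc Q (Arr l) = v" "ptgt Q (Arr l) = v"
    using p by (rule PuA_E)
  have l: "l \<noteq> []" using vl(3) BA_arr by blast
  have us: "ustar (Triv v, Arr l) = (Triv (gm v), Arr l)" using vl by (simp add: ustar_def)
  have S1: "{a \<in> arrs QB. src QB a = psrc QB (Triv (gm v)) \<and> pcomp (Arr [a]) (Arr l) \<in> BB}
      = {a \<in> arrs Q. src Q a = psrc Q (Triv v) \<and> pcomp (Arr [a]) (Arr l) \<in> BA}"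
  proof -
    have "src Q a = v" if "Arr (a # l) \<in> BA" for a using BA_cons[OF that l] vl(5) by simp
    then show ?thesis by (auto simp: basis_arr)
  qed
  have S2: "{a \<in> arrs QB. tgt QB a = psrc QB (Triv (gm v)) \<and> pcomp (Arr l) (Arr [a]) \<in> BB}
      = {a \<in> arrs Q. tgt Q a = psrc Q (Triv v) \<and> pcomp (Arr l) (Arr [a]) \<in> BA}"
  proof -
    have "tgt Q a = v" if "Arr (l @ [a]) \<in> BA" for a using BA_snoc[OF that l] vl(4) by simp
    then show ?thesis by (auto simp: basis_arr)
  qed
  show ?thesis unfolding vl(1) us delta0_b_def prod.case S1 S2 ..
qed

definition RP :: "(('v,'a) qpath \<times> ('v,'a) qpath) set" where
  "RP = {(x, y). psrc Q x = psrc Q y \<and> ptgt Q x = ptgt Q y}"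
definition RD :: "(('v,'a) qpath \<times> ('v,'a) qpath) set" where
  "RD = {(x, y). x = y}"

lemma U_supp:
  assumes p: "p \<in> PuA"
  shows "(delta0_b Q Z p :: _ \<Rightarrow> 'k::field) \<in> vanish (- (RP - RD))"
  unfolding vanish_def
proof (intro CollectI ballI)
  fix q assume q: "q \<in> - (RP - RD)"
  obtain v l where vl: "p = (Triv v, Arr l)" "v \<in> verts Q" "Arr l \<in> BA" "psrc Q (Arr l) = v" "ptgt Q (Arr l) = v"
    using p by (rule PuA_E)
  have l: "l \<noteq> []" using vl(3) BA_arr by blast
  show "(delta0_b Q Z p q :: 'k) = 0"
  proof (rule ccontr)
    assume "(delta0_b Q Z p q :: 'k) \<noteq> 0"
    from d0b_nz[OF this[unfolded vl(1)]] obtain a where a: "a \<in> arrs Q"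
      "(q = (Arr [a], Arr (a # l)) \<and> Arr (a # l) \<in> BA) \<or> (q = (Arr [a], Arr (l @ [a])) \<and> Arr (l @ [a]) \<in> BA)"
      by auto
    from a(2) have "q \<in> RP - RD"
    proof
      assume H: "q = (Arr [a], Arr (a # l)) \<and> Arr (a # l) \<in> BA"
      then have "src Q a = v" using BA_cons[of a l] l vl(5) by simp
      then show ?thesis using H l vl(4) by (auto simp: RP_def RD_def)
    next
      assume H: "q = (Arr [a], Arr (l @ [a])) \<and> Arr (l @ [a]) \<in> BA"
      then have "tgt Q a = v" using BA_snoc[of l a] l vl(4) by simp
      then show ?thesis using H l vl(5) by (auto simp: RP_def RD_def)
    qed
    then show False using q by blast
  qed
qed

lemma D_supp:
  "(delta0_b Q' Z' (Triv v, Triv v) :: _ \<Rightarrow> 'k::field) \<in> vanish (- RD)"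
  unfolding vanish_def
proof (intro CollectI ballI)
  fix q assume q: "q \<in> - RD"
  show "(delta0_b Q' Z' (Triv v, Triv v) q :: 'k) = 0"
  proof (rule ccontr)
    assume "(delta0_b Q' Z' (Triv v, Triv v) q :: 'k) \<noteq> 0"
    from d0b_nz[OF this] have "q \<in> RD" by (auto simp: RD_def)
    then show False using q by blast
  qed
qed

lemma N_supp:
  assumes p: "p \<in> PnB"
  shows "(delta0_b QB ZB p :: _ \<Rightarrow> 'k::field) \<in> vanish RP"
  unfolding vanish_def
proof (intro CollectI ballI)
  fix q assume q: "q \<in> RP"
  obtain l where vl: "p = (Triv e1, Arr l)" "Arr l \<in> BA" "psrc Q (Arr l) \<noteq> ptgt Q (Arr l)"
    using p by (auto simp: PnB_def)
  have l: "l \<noteq> []" using vl(2) BA_arr by blast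
  show "(delta0_b QB ZB p q :: 'k) = 0"
  proof (rule ccontr)
    assume "(delta0_b QB ZB p q :: 'k) \<noteq> 0"
    from d0b_nz[OF this[unfolded vl(1)]] obtain a where a:
      "(q = (Arr [a], Arr (a # l)) \<and> Arr (a # l) \<in> BA) \<or> (q = (Arr [a], Arr (l @ [a])) \<and> Arr (l @ [a]) \<in> BA)"
      by (auto simp: basis_arr)
    then have "q \<notin> RP"
    proof
      assume H: "q = (Arr [a], Arr (a # l)) \<and> Arr (a # l) \<in> BA"
      then have "src Q a = tgt Q (hd l)" using BA_cons[of a l] l by simp
      then show ?thesis using H l vl(3) by (auto simp: RP_def)
    next
      assume H: "q = (Arr [a], Arr (l @ [a])) \<and> Arr (l @ [a]) \<in> BA"
      then have "tgt Q a = src Q (last l)" using BA_snoc[of l a] l by simp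
      then show ?thesis using H l vl(3) by (auto simp: RP_def)
    qed
    then show False using q by blast
  qed
qed

lemma N_disj:
  assumes p: "(Triv e1, Arr l) \<in> PnB" and p': "(Triv e1, Arr l') \<in> PnB" and ne: "l \<noteq> l'"
  shows "(delta0_b QB ZB (Triv e1, Arr l) q :: 'k::field) = 0 \<or> (delta0_b QB ZB (Triv e1, Arr l') q :: 'k) = 0"
proof (rule ccontr)
  assume "\<not> ?thesis"
  then have nz: "(delta0_b QB ZB (Triv e1, Arr l) q :: 'k) \<noteq> 0" "(delta0_b QB ZB (Triv e1, Arr l') q :: 'k) \<noteq> 0" by auto
  have l: "l \<noteq> []" "psrc Q (Arr l) \<noteq> ptgt Q (Arr l)" using p BA_arr by (auto simp: PnB_def)
  have l': "l' \<noteq> []" "psrc Q (Arr l') \<noteq> ptgt Q (Arr l')" using p' BA_arr by (auto simp: PnB_def)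
  have cross: False if H: "a # m = m' @ [a]" "Arr (m' @ [a]) \<in> BA" "m' \<noteq> []" "src Q (last m') \<noteq> tgt Q (hd m')" for a m m'
  proof -
    have "tgt Q a = src Q (last m')" using BA_snoc[OF H(2,3)] by simp
    moreover have "hd m' = a" using H(1,3) by (cases m') auto
    ultimately show False using H(4) by simp
  qed
  from d0b_nz[OF nz(1)] obtain a where a:
    "(q = (Arr [a], Arr (a # l)) \<and> Arr (a # l) \<in> BA) \<or> (q = (Arr [a], Arr (l @ [a])) \<and> Arr (l @ [a]) \<in> BA)"
    by (auto simp: basis_arr)
  from d0b_nz[OF nz(2)] obtain b where b:
    "(q = (Arr [b], Arr (b # l')) \<and> Arr (b # l') \<in> BA) \<or> (q = (Arr [b], Arr (l' @ [b])) \<and> Arr (l' @ [b]) \<in> BA)"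
    by (auto simp: basis_arr)
  show False
    using a b ne cross[of a l l'] cross[of a l' l] l l' by auto
qed

end


lemma equiv_conn: "equiv (verts Q) (conn_rel Q)"
proof (rule equivI)
  show "conn_rel Q \<subseteq> verts Q \<times> verts Q" by (auto simp: conn_rel_def)
  show "refl_on (verts Q) (conn_rel Q)" by (rule refl_onI) (auto simp: conn_rel_def)
  have "sym (adj Q)" by (auto simp: sym_def adj_def)
  then have s: "sym ((adj Q)\<^sup>*)" by (rule sym_rtrancl)
  show "sym (conn_rel Q)" using s by (auto simp: sym_def conn_rel_def)
  show "trans (conn_rel Q)" by (auto simp: trans_def conn_rel_def)
qed

lemma adj_sym_rt: "(u, w) \<in> (adj Q)\<^sup>* \<Longrightarrow> (w, u) \<in> (adj Q)\<^sup>*"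
proof -
  have "sym (adj Q)" by (auto simp: sym_def adj_def)
  then have "sym ((adj Q)\<^sup>*)" by (rule sym_rtrancl)
  then show "(u, w) \<in> (adj Q)\<^sup>* \<Longrightarrow> (w, u) \<in> (adj Q)\<^sup>*" by (auto simp: sym_def)
qed

lemma adj_arr: "a \<in> arrs Q \<Longrightarrow> (src Q a, tgt Q a) \<in> adj Q \<and> (tgt Q a, src Q a) \<in> adj Q"
  by (auto simp: adj_def)

lemma const_on_rt:
  assumes "\<And>a. a \<in> arrs Q \<Longrightarrow> h (src Q a) = h (tgt Q a)" "(u, w) \<in> (adj Q)\<^sup>*"
  shows "h u = h w"
  using assms(2)
proof (induction rule: rtrancl_induct)
  case base then show ?case by simp
next
  case (step y z)
  then obtain a where "a \<in> arrs Q" "(src Q a = y \<and> tgt Q a = z) \<or> (src Q a = z \<and> tgt Q a = y)"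
    by (auto simp: adj_def)
  then show ?case using step assms(1) by metis
qed

context GS begin

lemma BB_single: "Arr [a] \<in> BB \<longleftrightarrow> a \<in> arrs Q"
  by (simp add: basis_arr BA_single)

lemma D_val_gen:
  assumes "finite (arrs Q')" "\<And>a. Arr [a] \<in> pbasis Q' Z' \<longleftrightarrow> a \<in> arrs Q'" "b \<in> arrs Q'"
  shows "(delta0_b Q' Z' (Triv v, Triv v) (Arr [b], Arr [b]) :: 'k::comm_ring_1)
      = (if src Q' b = v then 1 else 0) - (if tgt Q' b = v then 1 else 0)"
proof -
  let ?S1 = "{a\<in>arrs Q'. src Q' a = v \<and> Arr [a] \<in> pbasis Q' Z'}"
  let ?S2 = "{a\<in>arrs Q'. tgt Q' a = v \<and> Arr [a] \<in> pbasis Q' Z'}"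
  have f1: "finite ?S1" "finite ?S2" using assms(1) by auto
  have "(delta0_b Q' Z' (Triv v, Triv v) (Arr [b], Arr [b]) :: 'k)
      = (\<Sum>a\<in>?S1. if a = b then 1 else 0) - (\<Sum>a\<in>?S2. if a = b then 1 else 0)"
    by (simp add: delta0_b_def sum_fun_apply pt_apply eq_commute)
  also have "\<dots> = (if src Q' b = v then 1 else 0) - (if tgt Q' b = v then 1 else 0)"
    using f1 assms(2,3) by (simp add: sum.delta')
  finally show ?thesis .
qed

lemma D_zero_gen:
  assumes "(delta0_b Q' Z' (Triv v, Triv v) q :: 'k::comm_ring_1) \<noteq> 0"
  shows "\<exists>b\<in>arrs Q'. q = (Arr [b], Arr [b])"
  using d0b_nz[OF assms] by auto

abbreviation DA :: "'v \<Rightarrow> ('v,'a) qpath \<times> ('v,'a) qpath \<Rightarrow> 'k::field" where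
  "DA v \<equiv> delta0_b Q Z (Triv v, Triv v)"
abbreviation DB :: "'v \<Rightarrow> ('v,'a) qpath \<times> ('v,'a) qpath \<Rightarrow> 'k::field" where
  "DB v \<equiv> delta0_b QB ZB (Triv v, Triv v)"

lemma DA_val: "b \<in> arrs Q \<Longrightarrow> (DA v (Arr [b], Arr [b]) :: 'k::field) = (if src Q b = v then 1 else 0) - (if tgt Q b = v then 1 else 0)"
  by (rule D_val_gen[OF wf(2) BA_single])

lemma DB_val: "b \<in> arrs Q \<Longrightarrow> (DB v (Arr [b], Arr [b]) :: 'k::field) = (if gm (src Q b) = v then 1 else 0) - (if gm (tgt Q b) = v then 1 else 0)"
  using D_val_gen[of QB ZB b v] wf(2) BB_single by simp

lemma D_ext:
  assumes "\<And>b. b \<in> arrs Q \<Longrightarrow> (F (Arr [b], Arr [b]) :: 'k::field) = G (Arr [b], Arr [b])"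
    "\<And>q. \<not> (\<exists>b\<in>arrs Q. q = (Arr [b], Arr [b])) \<Longrightarrow> F q = 0"
    "\<And>q. \<not> (\<exists>b\<in>arrs Q. q = (Arr [b], Arr [b])) \<Longrightarrow> G q = 0"
  shows "F = G"
proof
  fix q show "F q = G q"
  proof (cases "\<exists>b\<in>arrs Q. q = (Arr [b], Arr [b])")
    case True then show ?thesis using assms(1) by blast
  next
    case False then show ?thesis using assms(2,3) by simp
  qed
qed

lemma DA_zero: "\<not> (\<exists>b\<in>arrs Q. q = (Arr [b], Arr [b])) \<Longrightarrow> (DA v q :: 'k::field) = 0"
  using D_zero_gen[of Q Z v q] by blast

lemma DB_zero: "\<not> (\<exists>b\<in>arrs Q. q = (Arr [b], Arr [b])) \<Longrightarrow> (DB v q :: 'k::field) = 0"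
  using D_zero_gen[of QB ZB v q] by auto

lemma DB_other: "v \<noteq> e1 \<Longrightarrow> v \<noteq> en \<Longrightarrow> (DB v :: _ \<Rightarrow> 'k::field) = DA v"
proof (rule D_ext)
  fix b assume "v \<noteq> e1" "v \<noteq> en" "b \<in> arrs Q"
  moreover have "gm x = v \<longleftrightarrow> x = v" for x using \<open>v \<noteq> e1\<close> \<open>v \<noteq> en\<close> by (auto simp: glue_map_def)
  ultimately show "(DB v (Arr [b], Arr [b]) :: 'k) = DA v (Arr [b], Arr [b])"
    by (simp add: DA_val DB_val)
qed (simp_all add: DA_zero DB_zero)

lemma DB_e1: "(DB e1 :: _ \<Rightarrow> 'k::field) = DA e1 + DA en"
proof (rule D_ext)
  fix b assume b: "b \<in> arrs Q"
  have g: "gm x = e1 \<longleftrightarrow> x = e1 \<or> x = en" for x using ne by (auto simp: glue_map_def)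
  show "(DB e1 (Arr [b], Arr [b]) :: 'k) = (DA e1 + DA en) (Arr [b], Arr [b])"
    using b ne by (simp add: DA_val DB_val g)
qed (simp_all add: DA_zero DB_zero)

lemma span_DA: "FS.span ((DA :: _ \<Rightarrow> _ \<Rightarrow> 'k::field) ` verts Q) = FS.span (insert (DA e1) ((DB :: _ \<Rightarrow> _ \<Rightarrow> 'k) ` (verts Q - {en})))"
proof (rule FS.span_eq[THEN iffD2], intro conjI)
  show "(DA :: _ \<Rightarrow> _ \<Rightarrow> 'k) ` verts Q \<subseteq> FS.span (insert (DA e1) (DB ` (verts Q - {en})))"
  proof
    fix x assume "x \<in> (DA :: _ \<Rightarrow> _ \<Rightarrow> 'k) ` verts Q"
    then obtain v where v: "v \<in> verts Q" "x = DA v" by blast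
    show "x \<in> FS.span (insert (DA e1) (DB ` (verts Q - {en})))"
    proof (cases "v = e1")
      case True then show ?thesis using v by (simp add: FS.span_base)
    next
      case False
      show ?thesis
      proof (cases "v = en")
        case True
        have "DB e1 \<in> FS.span (insert (DA e1) ((DB :: _ \<Rightarrow> _ \<Rightarrow> 'k) ` (verts Q - {en})))"
          using e1V ne by (intro FS.span_base) auto
        moreover have "DA e1 \<in> FS.span (insert (DA e1) ((DB :: _ \<Rightarrow> _ \<Rightarrow> 'k) ` (verts Q - {en})))"
          by (intro FS.span_base) auto
        ultimately have "DB e1 - DA e1 \<in> FS.span (insert (DA e1) ((DB :: _ \<Rightarrow> _ \<Rightarrow> 'k) ` (verts Q - {en})))"
          by (rule FS.span_diff)
        moreover have "DB e1 = (DA e1 + DA en :: _ \<Rightarrow> 'k)" by (rule DB_e1)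
        then have "DB e1 - DA e1 = (DA en :: _ \<Rightarrow> 'k)" by simp
        ultimately show ?thesis using v True by simp
      next
        case False2: False
        have "(DB v :: _ \<Rightarrow> 'k) = DA v" using False False2 by (rule DB_other)
        then have "x = DB v" using v by simp
        then show ?thesis using v False2 by (intro FS.span_base) auto
      qed
    qed
  qed
  show "insert (DA e1) ((DB :: _ \<Rightarrow> _ \<Rightarrow> 'k) ` (verts Q - {en})) \<subseteq> FS.span (DA ` verts Q)"
  proof
    fix x assume "x \<in> insert (DA e1) ((DB :: _ \<Rightarrow> _ \<Rightarrow> 'k) ` (verts Q - {en}))"
    then consider "x = DA e1" | v where "v \<in> verts Q - {en}" "x = DB v" by blast
    then show "x \<in> FS.span (DA ` verts Q)"
    proof cases
      case 1 then show ?thesis using e1V by (intro FS.span_base) auto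
    next
      case (2 v)
      show ?thesis
      proof (cases "v = e1")
        case True
        have "DA e1 + DA en \<in> FS.span ((DA :: _ \<Rightarrow> _ \<Rightarrow> 'k) ` verts Q)"
          using e1V enV by (intro FS.span_add FS.span_base) auto
        moreover have "DB e1 = (DA e1 + DA en :: _ \<Rightarrow> 'k)" by (rule DB_e1)
        ultimately show ?thesis using 2 True by simp
      next
        case False
        have "(DB v :: _ \<Rightarrow> 'k) = DA v" using False 2 by (intro DB_other) auto
        then show ?thesis using 2 by (auto intro: FS.span_base)
      qed
    qed
  qed
qed

lemma DA_not_in:
  assumes sb: "same_block Q e1 en"
  shows "(DA e1 :: _ \<Rightarrow> 'k::field) \<notin> FS.span (DB ` (verts Q - {en}))"
proof
  assume "(DA e1 :: _ \<Rightarrow> 'k) \<in> FS.span (DB ` (verts Q - {en}))"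
  then obtain c where c: "(DA e1 :: _ \<Rightarrow> 'k) = (\<Sum>v\<in>verts Q - {en}. fscale (c v) (DB v))"
    using span_image_param[of "verts Q - {en}"] wf(1) by blast
  define h where "h x = c (gm x) - (if x = e1 then 1 else (0::'k))" for x
  have "h (src Q b) = h (tgt Q b)" if b: "b \<in> arrs Q" for b
  proof -
    have gs: "gm (src Q b) \<in> verts Q - {en}" "gm (tgt Q b) \<in> verts Q - {en}" using wf(3,4)[OF b] gmV by auto
    have "(DA e1 (Arr [b], Arr [b]) :: 'k) = (\<Sum>v\<in>verts Q - {en}. c v * DB v (Arr [b], Arr [b]))"
      by (subst c) (simp add: sum_fun_apply)
    also have "\<dots> = (\<Sum>v\<in>verts Q - {en}. (if gm (src Q b) = v then c v else 0) - (if gm (tgt Q b) = v then c v else 0))"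
      using b by (intro sum.cong) (auto simp: DB_val)
    also have "\<dots> = c (gm (src Q b)) - c (gm (tgt Q b))"
      using gs wf(1) by (simp add: sum_subtractf sum.delta)
    finally have E: "(if src Q b = e1 then 1 else 0) - (if tgt Q b = e1 then 1 else (0::'k)) = c (gm (src Q b)) - c (gm (tgt Q b))"
      using b by (simp add: DA_val)
    have "h (src Q b) = (c (gm (src Q b)) - c (gm (tgt Q b))) - ((if src Q b = e1 then 1 else 0) - (if tgt Q b = e1 then 1 else (0::'k))) + h (tgt Q b)"
      by (simp add: h_def algebra_simps)
    also have "\<dots> = h (tgt Q b)" using E by simp
    finally show ?thesis .
  qed
  moreover have "(e1, en) \<in> (adj Q)\<^sup>*" using sb by (simp add: same_block_def conn_rel_def)
  ultimately have "h e1 = h en" by (rule const_on_rt)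
  then show False using ne by (simp add: h_def)
qed

lemma DA_in:
  assumes sb: "\<not> same_block Q e1 en"
  shows "(DA e1 :: _ \<Rightarrow> 'k::field) \<in> FS.span (DB ` (verts Q - {en}))"
proof -
  define C where "C = {v \<in> verts Q. (e1, v) \<in> (adj Q)\<^sup>*}"
  have finC: "finite C" using wf(1) by (simp add: C_def)
  have e1C: "e1 \<in> C" using e1V by (simp add: C_def)
  have enC: "en \<notin> C" using sb e1V enV by (auto simp: C_def same_block_def conn_rel_def)
  have closed: "src Q b \<in> C \<longleftrightarrow> tgt Q b \<in> C" if b: "b \<in> arrs Q" for b
    using adj_arr[OF b] wf(3,4)[OF b] by (auto simp: C_def intro: rtrancl_into_rtrancl)
  have sum0: "(\<Sum>v\<in>C. DA v) = (0 :: _ \<Rightarrow> 'k)"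
  proof (rule D_ext)
    fix b assume b: "b \<in> arrs Q"
    have "(\<Sum>v\<in>C. DA v) (Arr [b], Arr [b]) = (\<Sum>v\<in>C. (if src Q b = v then 1 else 0) - (if tgt Q b = v then 1 else (0::'k)))"
      using b by (simp add: sum_fun_apply DA_val)
    also have "\<dots> = (if src Q b \<in> C then 1 else 0) - (if tgt Q b \<in> C then 1 else 0)"
      using finC by (simp add: sum_subtractf sum.delta)
    also have "\<dots> = 0" using closed[OF b] by simp
    finally show "(\<Sum>v\<in>C. DA v) (Arr [b], Arr [b]) = (0 :: _ \<Rightarrow> 'k) (Arr [b], Arr [b])" by simp
  next
    fix q :: "('v,'a) qpath \<times> ('v,'a) qpath"
    assume "\<not> (\<exists>b\<in>arrs Q. q = (Arr [b], Arr [b]))"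
    then show "(\<Sum>v\<in>C. DA v) q = (0::'k)" by (simp add: sum_fun_apply DA_zero)
  qed auto
  have "(\<Sum>v\<in>C. DA v) = DA e1 + (\<Sum>v\<in>C - {e1}. (DA v :: _ \<Rightarrow> 'k))"
    using finC e1C by (simp add: sum.remove)
  then have "DA e1 = - (\<Sum>v\<in>C - {e1}. (DA v :: _ \<Rightarrow> 'k))" using sum0 by (simp add: eq_neg_iff_add_eq_0)
  also have "\<dots> = - (\<Sum>v\<in>C - {e1}. (DB v :: _ \<Rightarrow> 'k))"
  proof (intro arg_cong[where f=uminus] sum.cong refl)
    fix x assume "x \<in> C - {e1}"
    then have "x \<noteq> e1" "x \<noteq> en" using enC by auto
    then show "(DA x :: _ \<Rightarrow> 'k) = DB x" by (intro DB_other[symmetric])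
  qed
  also have "\<dots> \<in> FS.span (DB ` (verts Q - {en}))"
    using enC by (intro FS.span_neg FS.span_sum FS.span_base) (auto simp: C_def)
  finally show ?thesis .
qed

end


context GS begin

definition EE :: "('v \<times> 'v) set" where "EE = {(e1, en), (en, e1)}"

lemma adj_glue: "(x, y) \<in> adj Q \<Longrightarrow> (gm x, gm y) \<in> adj QB"
  by (auto simp: adj_def)

lemma rt_glue: "(x, y) \<in> (adj Q)\<^sup>* \<Longrightarrow> (gm x, gm y) \<in> (adj QB)\<^sup>*"
proof (induction rule: rtrancl_induct)
  case base then show ?case by simp
next
  case (step y z) then show ?case using adj_glue by (meson rtrancl.rtrancl_into_rtrancl)
qed

lemma gm_eq_rt: "gm x = gm y \<Longrightarrow> (x, y) \<in> (adj Q \<union> EE)\<^sup>*"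
  by (auto simp: glue_map_eq EE_def)

lemma lift:
  assumes "(p, q) \<in> (adj QB)\<^sup>*"
  shows "gm u = p \<Longrightarrow> \<exists>w. gm w = q \<and> (u, w) \<in> (adj Q \<union> EE)\<^sup>*"
  using assms
proof (induction rule: rtrancl_induct)
  case base then show ?case by auto
next
  case (step y z)
  then obtain w where w: "gm w = y" "(u, w) \<in> (adj Q \<union> EE)\<^sup>*" by blast
  from step(2) obtain a where a: "a \<in> arrs Q" "(gm (src Q a) = y \<and> gm (tgt Q a) = z) \<or> (gm (src Q a) = z \<and> gm (tgt Q a) = y)"
    by (auto simp: adj_def)
  from a(2) show ?case
  proof
    assume H: "gm (src Q a) = y \<and> gm (tgt Q a) = z"
    have "(w, src Q a) \<in> (adj Q \<union> EE)\<^sup>*" using gm_eq_rt H w(1) by simp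
    moreover have "(src Q a, tgt Q a) \<in> adj Q \<union> EE" using adj_arr[OF a(1)] by blast
    ultimately have "(u, tgt Q a) \<in> (adj Q \<union> EE)\<^sup>*" using w(2) by (meson rtrancl.rtrancl_into_rtrancl rtrancl_trans)
    then show ?thesis using H by blast
  next
    assume H: "gm (src Q a) = z \<and> gm (tgt Q a) = y"
    have "(w, tgt Q a) \<in> (adj Q \<union> EE)\<^sup>*" using gm_eq_rt H w(1) by simp
    moreover have "(tgt Q a, src Q a) \<in> adj Q \<union> EE" using adj_arr[OF a(1)] by blast
    ultimately have "(u, src Q a) \<in> (adj Q \<union> EE)\<^sup>*" using w(2) by (meson rtrancl.rtrancl_into_rtrancl rtrancl_trans)
    then show ?thesis using H by blast
  qed
qed

lemma TT:
  assumes "(u, w) \<in> (adj Q \<union> EE)\<^sup>*"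
  shows "(u, w) \<in> (adj Q)\<^sup>* \<or> (((u, e1) \<in> (adj Q)\<^sup>* \<or> (u, en) \<in> (adj Q)\<^sup>*) \<and> ((e1, w) \<in> (adj Q)\<^sup>* \<or> (en, w) \<in> (adj Q)\<^sup>*))"
  using assms
proof (induction rule: rtrancl_induct)
  case base then show ?case by simp
next
  case (step y z)
  show ?case
  proof (cases "(y, z) \<in> adj Q")
    case True
    then show ?thesis using step(3) by (meson rtrancl.rtrancl_into_rtrancl)
  next
    case False
    then have yz: "(y = e1 \<and> z = en) \<or> (y = en \<and> z = e1)" using step(2) by (auto simp: EE_def)
    then show ?thesis using step(3) by auto
  qed
qed

abbreviation "R \<equiv> conn_rel Q"
abbreviation "RB \<equiv> conn_rel QB"

lemma vertsB: "verts QB = verts Q - {en}" using gmV by simp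

lemma CH:
  assumes u: "u \<in> verts Q" and w: "w \<in> verts Q"
  shows "(gm u, gm w) \<in> RB \<longleftrightarrow> (u, w) \<in> R \<or> (((u, e1) \<in> R \<or> (u, en) \<in> R) \<and> ((e1, w) \<in> R \<or> (en, w) \<in> R))"
proof
  assume "(gm u, gm w) \<in> RB"
  then have "(gm u, gm w) \<in> (adj QB)\<^sup>*" by (simp add: conn_rel_def)
  then obtain w' where w': "gm w' = gm w" "(u, w') \<in> (adj Q \<union> EE)\<^sup>*" using lift by blast
  have "(w', w) \<in> (adj Q \<union> EE)\<^sup>*" using gm_eq_rt w'(1) by simp
  then have "(u, w) \<in> (adj Q \<union> EE)\<^sup>*" using w'(2) by (meson rtrancl_trans)
  from TT[OF this] show "(u, w) \<in> R \<or> (((u, e1) \<in> R \<or> (u, en) \<in> R) \<and> ((e1, w) \<in> R \<or> (en, w) \<in> R))"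
    using u w e1V enV by (auto simp: conn_rel_def)
next
  assume H: "(u, w) \<in> R \<or> (((u, e1) \<in> R \<or> (u, en) \<in> R) \<and> ((e1, w) \<in> R \<or> (en, w) \<in> R))"
  have gu: "gm u \<in> verts QB" "gm w \<in> verts QB" using u w by auto
  have "(gm u, gm w) \<in> (adj QB)\<^sup>*"
    using H
  proof
    assume "(u, w) \<in> R" then show ?thesis using rt_glue by (auto simp: conn_rel_def)
  next
    assume H2: "((u, e1) \<in> R \<or> (u, en) \<in> R) \<and> ((e1, w) \<in> R \<or> (en, w) \<in> R)"
    then have "(gm u, e1) \<in> (adj QB)\<^sup>*" using rt_glue[of u e1] rt_glue[of u en] ne
      by (auto simp: conn_rel_def)
    moreover have "(e1, gm w) \<in> (adj QB)\<^sup>*" using H2 rt_glue[of e1 w] rt_glue[of en w] ne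
      by (auto simp: conn_rel_def)
    ultimately show ?thesis by (rule rtrancl_trans)
  qed
  then show "(gm u, gm w) \<in> RB" using gu by (simp add: conn_rel_def)
qed

definition psi :: "'v set \<Rightarrow> 'v set" where "psi X = RB `` (gm ` X)"

lemma psi_class:
  assumes x: "x \<in> verts Q"
  shows "psi (R `` {x}) = RB `` {gm x}"
proof
  show "RB `` {gm x} \<subseteq> psi (R `` {x})"
    using x equiv_class_self[OF equiv_conn x] by (auto simp: psi_def)
  show "psi (R `` {x}) \<subseteq> RB `` {gm x}"
  proof
    fix z assume "z \<in> psi (R `` {x})"
    then obtain y where y: "(x, y) \<in> R" "(gm y, z) \<in> RB" by (auto simp: psi_def)
    have "y \<in> verts Q" using y(1) by (auto simp: conn_rel_def)
    then have "(gm x, gm y) \<in> RB" using CH[OF x] y(1) by blast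
    then show "z \<in> RB `` {gm x}" using y(2) equiv_conn[of QB] by (auto simp: equiv_def trans_def)
  qed
qed

lemma psi_onto: "psi ` (verts Q // R) = verts QB // RB"
proof
  show "psi ` (verts Q // R) \<subseteq> verts QB // RB"
  proof
    fix Y assume "Y \<in> psi ` (verts Q // R)"
    then obtain x where x: "x \<in> verts Q" "Y = psi (R `` {x})" by (auto elim!: quotientE)
    then show "Y \<in> verts QB // RB" using psi_class[OF x(1)] by (auto intro!: quotientI)
  qed
  show "verts QB // RB \<subseteq> psi ` (verts Q // R)"
  proof
    fix Y assume "Y \<in> verts QB // RB"
    then obtain y where y: "y \<in> verts QB" "Y = RB `` {y}" by (auto elim!: quotientE)
    then obtain x where x: "x \<in> verts Q" "y = gm x" by auto
    then have "Y = psi (R `` {x})" using y psi_class by simp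
    then show "Y \<in> psi ` (verts Q // R)" using x by (auto intro: quotientI)
  qed
qed

lemma psi_eq:
  assumes x: "x \<in> verts Q" and y: "y \<in> verts Q" and eq: "psi (R `` {x}) = psi (R `` {y})"
  shows "(gm x, gm y) \<in> RB"
proof -
  have "RB `` {gm x} = RB `` {gm y}" using eq psi_class x y by simp
  moreover have "gm y \<in> verts QB" using y by simp
  ultimately show ?thesis using eq_equiv_class equiv_conn by metis
qed

lemma finQuot: "finite (verts Q // R)"
  using wf(1) by (rule finite_quotient) (auto simp: conn_rel_def)

lemma R_sym: "(a, b) \<in> R \<Longrightarrow> (b, a) \<in> R"
  using equiv_conn[of Q] unfolding equiv_def sym_def by blast

lemma R_trans: "(a, b) \<in> R \<Longrightarrow> (b, c) \<in> R \<Longrightarrow> (a, c) \<in> R"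
  using equiv_conn[of Q] unfolding equiv_def trans_def by blast

lemma ncomp_same:
  assumes sb: "same_block Q e1 en"
  shows "ncomp Q = ncomp QB"
proof -
  have e1n: "(e1, en) \<in> R" using sb by (simp add: same_block_def)
  have inj: "inj_on psi (verts Q // R)"
  proof (rule inj_onI)
    fix X Y assume X: "X \<in> verts Q // R" and Y: "Y \<in> verts Q // R" and eq: "psi X = psi Y"
    obtain x where x: "x \<in> verts Q" "X = R `` {x}" using X by (auto elim!: quotientE)
    obtain y where y: "y \<in> verts Q" "Y = R `` {y}" using Y by (auto elim!: quotientE)
    have "(gm x, gm y) \<in> RB" using psi_eq x y eq by simp
    then have H: "(x, y) \<in> R \<or> (((x, e1) \<in> R \<or> (x, en) \<in> R) \<and> ((e1, y) \<in> R \<or> (en, y) \<in> R))"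
      using CH x y by blast
    have "(x, y) \<in> R"
    proof (cases "(x, y) \<in> R")
      case False
      then have H2: "((x, e1) \<in> R \<or> (x, en) \<in> R) \<and> ((e1, y) \<in> R \<or> (en, y) \<in> R)" using H by blast
      have "(x, e1) \<in> R" using H2 R_trans[OF _ R_sym[OF e1n], of x] by blast
      moreover have "(e1, y) \<in> R" using H2 R_trans[OF e1n, of y] by blast
      ultimately show ?thesis by (rule R_trans)
    qed
    then show "X = Y" using x y equiv_class_eq[OF equiv_conn] by simp
  qed
  have "ncomp QB = card (psi ` (verts Q // R))" using psi_onto by (simp add: ncomp_def)
  also have "\<dots> = card (verts Q // R)" using inj by (rule card_image)
  finally show ?thesis by (simp add: ncomp_def)
qed

lemma ncomp_diff:
  assumes sb: "\<not> same_block Q e1 en"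
  shows "ncomp Q = ncomp QB + 1"
proof -
  have e1n: "(e1, en) \<notin> R" using sb by (simp add: same_block_def)
  let ?Cn = "R `` {en}"
  let ?C1 = "R `` {e1}"
  let ?A = "verts Q // R - {?Cn}"
  have Cn: "?Cn \<in> verts Q // R" using enV by (rule quotientI)
  have C1: "?C1 \<in> ?A"
  proof -
    have neq: "?C1 \<noteq> ?Cn"
    proof
      assume "?C1 = ?Cn"
      then have "(e1, en) \<in> R" by (rule eq_equiv_class[OF _ equiv_conn enV])
      then show False using e1n by blast
    qed
    show ?thesis
    proof (rule DiffI)
      show "?C1 \<in> verts Q // R" using e1V by (rule quotientI)
      show "?C1 \<notin> {?Cn}" using neq by (simp only: singleton_iff not_False_eq_True)
    qed
  qed
  have inj: "inj_on psi ?A"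
  proof (rule inj_onI)
    fix X Y assume X: "X \<in> ?A" and Y: "Y \<in> ?A" and eq: "psi X = psi Y"
    obtain x where x: "x \<in> verts Q" "X = R `` {x}" using X by (auto elim!: quotientE)
    obtain y where y: "y \<in> verts Q" "Y = R `` {y}" using Y by (auto elim!: quotientE)
    have xn: "(x, en) \<notin> R"
    proof
      assume "(x, en) \<in> R"
      then have "R `` {x} = R `` {en}" by (rule equiv_class_eq[OF equiv_conn])
      then show False using X x by simp
    qed
    have yn: "(en, y) \<notin> R"
    proof
      assume "(en, y) \<in> R"
      then have "R `` {en} = R `` {y}" by (rule equiv_class_eq[OF equiv_conn])
      then show False using Y y by simp
    qed
    have "(gm x, gm y) \<in> RB" using psi_eq x y eq by simp
    then have H: "(x, y) \<in> R \<or> (((x, e1) \<in> R \<or> (x, en) \<in> R) \<and> ((e1, y) \<in> R \<or> (en, y) \<in> R))"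
      using CH x y by blast
    have "(x, y) \<in> R"
    proof (cases "(x, y) \<in> R")
      case False
      then have "(x, e1) \<in> R" "(e1, y) \<in> R" using H xn yn by blast+
      then show ?thesis by (rule R_trans)
    qed
    then show "X = Y" using x y equiv_class_eq[OF equiv_conn] by simp
  qed
  have img: "psi ` ?A = verts QB // RB"
  proof
    have "psi ` ?A \<subseteq> psi ` (verts Q // R)" by (rule image_mono) (rule Diff_subset)
    then show "psi ` ?A \<subseteq> verts QB // RB" using psi_onto by simp
    show "verts QB // RB \<subseteq> psi ` ?A"
    proof
      fix Y assume "Y \<in> verts QB // RB"
      then have "Y \<in> psi ` (verts Q // R)" using psi_onto by simp
      then obtain X where X: "X \<in> verts Q // R" "Y = psi X" by (rule imageE) simp
      show "Y \<in> psi ` ?A"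
      proof (cases "X = ?Cn")
        case False
        then have "X \<in> ?A" using X(1) by simp
        then show ?thesis using X(2) by (rule rev_image_eqI)
      next
        case True
        have g1: "gm e1 = e1" using ne by simp
        have "psi ?Cn = psi ?C1" unfolding psi_class[OF enV] psi_class[OF e1V] g1 by simp
        then have "Y = psi ?C1" using X True by simp
        then show ?thesis using C1 by (simp only: image_eqI)
      qed
    qed
  qed
  have c0: "card (psi ` ?A) = card (verts QB // RB)" by (simp only: img)
  have c1: "ncomp QB = card (psi ` ?A)" by (simp only: c0 ncomp_def)
  have c2: "card (psi ` ?A) = card ?A" by (rule card_image[OF inj])
  have c3: "card ?A = card (verts Q // R) - 1" by (rule card_Diff_singleton[OF Cn])
  have ne0: "verts Q // R \<noteq> {}"
  proof
    assume "verts Q // R = {}"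
    then show False using Cn by (simp only: empty_iff)
  qed
  have c4: "card (verts Q // R) \<noteq> 0" using finQuot ne0 by simp
  have c5: "ncomp Q = card (verts Q // R)" by (rule ncomp_def)
  have "ncomp QB + 1 = card (verts Q // R) - 1 + 1" using c1 c2 c3 by simp
  also have "\<dots> = card (verts Q // R)" using c4 by simp
  finally show ?thesis using c5 by simp
qed

end


lemma vanish_anti: "A \<subseteq> B \<Longrightarrow> vanish B \<subseteq> vanish A"
  by (auto simp: vanish_def)

lemma dim_span_Un:
  fixes X Y :: "('x \<Rightarrow> 'k::field) set"
  assumes "finite X" "finite Y" "X \<subseteq> vanish G" "Y \<subseteq> vanish (- G)"
  shows "FS.dim (FS.span (X \<union> Y)) = FS.dim (FS.span X) + FS.dim (FS.span Y)"
proof -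
  have sX: "FS.span X \<subseteq> vanish G" using span_vanish[OF assms(3)] .
  have sY: "FS.span Y \<subseteq> vanish (- G)" using span_vanish[OF assms(4)] .
  have int: "FS.span X \<inter> FS.span Y \<subseteq> {0}"
  proof
    fix x assume "x \<in> FS.span X \<inter> FS.span Y"
    then have "x \<in> vanish G" "x \<in> vanish (- G)" using sX sY by blast+
    then have "x = 0" by (auto simp: vanish_def fun_eq_iff)
    then show "x \<in> {0}" by simp
  qed
  have "FS.span (X \<union> Y) = {x + y | x y. x \<in> FS.span X \<and> y \<in> FS.span Y}" by (rule FS.span_Un)
  then have "FS.dim (FS.span (X \<union> Y)) = FS.dim {x + y | x y. x \<in> FS.span X \<and> y \<in> FS.span Y}" by simp
  also have "\<dots> = FS.dim (FS.span X) + FS.dim (FS.span Y)"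
  proof (rule dim_direct[OF FS.subspace_span FS.subspace_span int])
    show "FS.span X \<subseteq> FS.span (X \<union> Y)" by (rule FS.span_mono) blast
    show "FS.span Y \<subseteq> FS.span (X \<union> Y)" by (rule FS.span_mono) blast
    show "finite (X \<union> Y)" using assms(1,2) by simp
  qed
  finally show ?thesis .
qed

lemma apath_conn: "is_apath Q l \<Longrightarrow> (src Q (last l), tgt Q (hd l)) \<in> (adj Q)\<^sup>*"
proof (induction l)
  case Nil then show ?case by (simp add: is_apath_def)
next
  case (Cons a l)
  show ?case
  proof (cases "l = []")
    case True then show ?thesis using Cons.prems adj_arr[of a Q] by (auto simp: is_apath_Cons)
  next
    case False
    then have "is_apath Q l" "src Q a = tgt Q (hd l)" "a \<in> arrs Q" using Cons.prems by (auto simp: is_apath_Cons)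
    then have "(src Q (last l), src Q a) \<in> (adj Q)\<^sup>*" using Cons.IH by simp
    moreover have "(src Q a, tgt Q a) \<in> adj Q" using adj_arr[OF \<open>a \<in> arrs Q\<close>] by blast
    ultimately show ?thesis using False by (simp add: rtrancl.rtrancl_into_rtrancl)
  qed
qed

context GS begin

abbreviation UA :: "(('v,'a) qpath \<times> ('v,'a) qpath \<Rightarrow> 'k::field) set" where
  "UA \<equiv> delta0_b Q Z ` PuA"
abbreviation DAs :: "(('v,'a) qpath \<times> ('v,'a) qpath \<Rightarrow> 'k::field) set" where
  "DAs \<equiv> DA ` verts Q"
abbreviation DBs :: "(('v,'a) qpath \<times> ('v,'a) qpath \<Rightarrow> 'k::field) set" where
  "DBs \<equiv> DB ` (verts Q - {en})"
abbreviation NB :: "(('v,'a) qpath \<times> ('v,'a) qpath \<Rightarrow> 'k::field) set" where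
  "NB \<equiv> delta0_b QB ZB ` PnB"

lemma finPuA: "finite PuA" using finP0A P0A_split by (metis finite_Un)
lemma finPnB: "finite PnB" using finP0B P0B_split by (metis finite_Un)

lemma Im0A_eq: "(Im0 Q Z :: (_ \<Rightarrow> 'k::field) set) = FS.span (UA \<union> DAs)"
proof -
  have "(Im0 Q Z :: (_ \<Rightarrow> 'k) set) = FS.span (delta0_b Q Z ` P0A)"
    unfolding Im0_def delta0_def by (rule lin_ext_image[OF finP0A])
  also have "delta0_b Q Z ` P0A = (UA \<union> DAs :: (_ \<Rightarrow> 'k) set)"
    unfolding P0A_split image_Un PdA_def image_image ..
  finally show ?thesis .
qed

lemma Im0B_eq: "(Im0 QB ZB :: (_ \<Rightarrow> 'k::field) set) = FS.span ((UA \<union> DBs) \<union> NB)"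
proof -
  have "(Im0 QB ZB :: (_ \<Rightarrow> 'k) set) = FS.span (delta0_b QB ZB ` P0B)"
    unfolding Im0_def delta0_def by (rule lin_ext_image[OF finP0B])
  also have "delta0_b QB ZB ` P0B = ((UA \<union> DBs) \<union> NB :: (_ \<Rightarrow> 'k) set)"
  proof -
    have "delta0_b QB ZB ` ustar ` PuA = (UA :: (_ \<Rightarrow> 'k) set)"
      unfolding image_image by (rule image_cong[OF refl]) (rule d0b_U)
    then show ?thesis unfolding P0B_split image_Un PdB_def image_image by simp
  qed
  finally show ?thesis .
qed

lemma UA_supp_D: "(UA :: (_ \<Rightarrow> 'k::field) set) \<subseteq> vanish RD"
proof
  fix x assume "x \<in> (UA :: (_ \<Rightarrow> 'k) set)"
  then obtain p where p: "p \<in> PuA" "x = delta0_b Q Z p" by blast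
  have "x \<in> vanish (- (RP - RD))" using U_supp[OF p(1)] p(2) by simp
  moreover have "vanish (- (RP - RD)) \<subseteq> (vanish RD :: (_ \<Rightarrow> 'k) set)" by (rule vanish_anti) blast
  ultimately show "x \<in> vanish RD" by blast
qed

lemma UA_supp_P: "(UA :: (_ \<Rightarrow> 'k::field) set) \<subseteq> vanish (- RP)"
proof
  fix x assume "x \<in> (UA :: (_ \<Rightarrow> 'k) set)"
  then obtain p where p: "p \<in> PuA" "x = delta0_b Q Z p" by blast
  have "x \<in> vanish (- (RP - RD))" using U_supp[OF p(1)] p(2) by simp
  moreover have "vanish (- (RP - RD)) \<subseteq> (vanish (- RP) :: (_ \<Rightarrow> 'k) set)" by (rule vanish_anti) blast
  ultimately show "x \<in> vanish (- RP)" by blast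
qed

lemma DAs_supp: "(DAs :: (_ \<Rightarrow> 'k::field) set) \<subseteq> vanish (- RD)"
  using D_supp by blast

lemma DBs_supp: "(DBs :: (_ \<Rightarrow> 'k::field) set) \<subseteq> vanish (- RD)"
  using D_supp by blast

lemma RD_RP: "RD \<subseteq> RP" by (auto simp: RD_def RP_def)

lemma DBs_supp_P: "(DBs :: (_ \<Rightarrow> 'k::field) set) \<subseteq> vanish (- RP)"
proof -
  have "vanish (- RD) \<subseteq> (vanish (- RP) :: (_ \<Rightarrow> 'k) set)" by (rule vanish_anti) (use RD_RP in blast)
  then show ?thesis using DBs_supp by blast
qed

lemma NB_supp: "(NB :: (_ \<Rightarrow> 'k::field) set) \<subseteq> vanish (- (- RP))"
  using N_supp by auto

lemma dim_Im0A: "kdim (Im0 Q Z :: (_ \<Rightarrow> 'k::field) set) = FS.dim (FS.span (UA :: (_ \<Rightarrow> 'k) set)) + FS.dim (FS.span (DAs :: (_ \<Rightarrow> 'k) set))"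
  unfolding kdim_FS Im0A_eq
  by (rule dim_span_Un[OF _ _ UA_supp_D DAs_supp]) (use finPuA wf(1) in auto)

lemma dim_Im0B: "kdim (Im0 QB ZB :: (_ \<Rightarrow> 'k::field) set) = FS.dim (FS.span (UA :: (_ \<Rightarrow> 'k) set)) + FS.dim (FS.span (DBs :: (_ \<Rightarrow> 'k) set)) + FS.dim (FS.span (NB :: (_ \<Rightarrow> 'k) set))"
proof -
  have "kdim (Im0 QB ZB :: (_ \<Rightarrow> 'k) set) = FS.dim (FS.span ((UA \<union> DBs) \<union> (NB :: (_ \<Rightarrow> 'k) set)))"
    unfolding kdim_FS Im0B_eq ..
  also have "\<dots> = FS.dim (FS.span (UA \<union> DBs :: (_ \<Rightarrow> 'k) set)) + FS.dim (FS.span (NB :: (_ \<Rightarrow> 'k) set))"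
    by (rule dim_span_Un[OF _ _ _ NB_supp]) (use finPuA wf(1) finPnB UA_supp_P DBs_supp_P in auto)
  also have "FS.dim (FS.span (UA \<union> DBs :: (_ \<Rightarrow> 'k) set)) = FS.dim (FS.span (UA :: (_ \<Rightarrow> 'k) set)) + FS.dim (FS.span (DBs :: (_ \<Rightarrow> 'k) set))"
    by (rule dim_span_Un[OF _ _ UA_supp_D DBs_supp]) (use finPuA wf(1) in auto)
  finally show ?thesis .
qed

end


context GS begin

lemma PnB_sub: "PnB \<subseteq> P0B" using P0B_split by blast

lemma special_eq:
  "special_paths TYPE('k::field) Q Z e1 en = {p. (Triv e1, p) \<in> PnB \<and> (delta0_b QB ZB (Triv e1, p) :: _ \<Rightarrow> 'k) \<noteq> 0}"
proof (rule set_eqI)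
  fix p :: "('v,'a) qpath"
  have g1: "gm e1 = e1" using ne by simp
  show "p \<in> special_paths TYPE('k) Q Z e1 en \<longleftrightarrow> p \<in> {p. (Triv e1, p) \<in> PnB \<and> (delta0_b QB ZB (Triv e1, p) :: _ \<Rightarrow> 'k) \<noteq> 0}"
  proof (cases p)
    case (Triv v)
    have n1: "(Triv e1, p) \<notin> PnB" using Triv by (auto simp: PnB_def)
    have "\<not> ((psrc Q p = e1 \<and> ptgt Q p = en) \<or> (psrc Q p = en \<and> ptgt Q p = e1))" using Triv ne by auto
    then have "p \<notin> special_paths TYPE('k) Q Z e1 en" unfolding special_paths_def mem_Collect_eq by blast
    then show ?thesis using n1 by blast
  next
    case (Arr l)
    have ps: "pstar e1 en p = p" using Arr by simp
    have PnB_iff: "(Triv e1, p) \<in> PnB \<longleftrightarrow> p \<in> BA \<and> ((psrc Q p = e1 \<and> ptgt Q p = en) \<or> (psrc Q p = en \<and> ptgt Q p = e1))"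
      using Arr ne by (auto simp: PnB_def)
    have d: "(Triv e1, p) \<in> PnB \<Longrightarrow> delta0 QB ZB (pt (Triv e1) p) = (delta0_b QB ZB (Triv e1, p) :: _ \<Rightarrow> 'k)"
      unfolding delta0_def pt_def using PnB_sub by (intro lin_ext_vind finP0B) blast
    have sp: "p \<in> special_paths TYPE('k) Q Z e1 en \<longleftrightarrow> p \<in> BA \<and> ((psrc Q p = e1 \<and> ptgt Q p = en) \<or> (psrc Q p = en \<and> ptgt Q p = e1))
        \<and> (delta0 QB ZB (pt (Triv e1) p) :: _ \<Rightarrow> 'k) \<noteq> 0"
      unfolding special_paths_def mem_Collect_eq g1 ps ..
    show ?thesis
    proof (cases "(Triv e1, p) \<in> PnB")
      case True
      then show ?thesis unfolding sp mem_Collect_eq d[OF True] using PnB_iff by blast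
    next
      case False
      then show ?thesis unfolding sp mem_Collect_eq using PnB_iff by blast
    qed
  qed
qed

lemma dim_NB: "FS.dim (FS.span (NB :: (_ \<Rightarrow> 'k::field) set)) = sp TYPE('k) Q Z e1 en"
proof -
  let ?f = "\<lambda>p. (delta0_b QB ZB (Triv e1, p) :: _ \<Rightarrow> 'k)"
  let ?S = "special_paths TYPE('k) Q Z e1 en"
  have S: "?S = {p. (Triv e1, p) \<in> PnB \<and> ?f p \<noteq> 0}" by (rule special_eq)
  have Smem: "p \<in> ?S \<longleftrightarrow> (Triv e1, p) \<in> PnB \<and> ?f p \<noteq> 0" for p
    unfolding S mem_Collect_eq ..
  have PnB_form: "q \<in> PnB \<Longrightarrow> \<exists>l. q = (Triv e1, Arr l)" for q by (auto simp: PnB_def)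
  have NS: "(NB :: (_ \<Rightarrow> 'k) set) - {0} = ?f ` ?S"
  proof
    show "(NB :: (_ \<Rightarrow> 'k) set) - {0} \<subseteq> ?f ` ?S"
    proof
      fix x assume x: "x \<in> (NB :: (_ \<Rightarrow> 'k) set) - {0}"
      then obtain q where q: "q \<in> PnB" "x = delta0_b QB ZB q" by blast
      have x0: "x \<noteq> 0" using x by blast
      obtain l where l: "q = (Triv e1, Arr l)" using PnB_form[OF q(1)] by blast
      have "Arr l \<in> ?S" unfolding Smem using q l x0 by simp
      moreover have "x = ?f (Arr l)" using q(2) l by simp
      ultimately show "x \<in> ?f ` ?S" by (rule rev_image_eqI)
    qed
    show "?f ` ?S \<subseteq> (NB :: (_ \<Rightarrow> 'k) set) - {0}"
    proof
      fix x assume "x \<in> ?f ` ?S"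
      then obtain p where p: "p \<in> ?S" "x = ?f p" by blast
      then have m: "(Triv e1, p) \<in> PnB" "?f p \<noteq> 0" unfolding Smem by blast+
      have "x \<in> (NB :: (_ \<Rightarrow> 'k) set)" unfolding p(2) using m(1) by (rule imageI)
      moreover have "x \<notin> {0}" using m(2) p(2) by simp
      ultimately show "x \<in> (NB :: (_ \<Rightarrow> 'k) set) - {0}" by (rule DiffI)
    qed
  qed
  have disj: "?f p q = 0 \<or> ?f p' q = 0" if "p \<in> ?S" "p' \<in> ?S" "p \<noteq> p'" for p p' q
  proof -
    have m: "(Triv e1, p) \<in> PnB" "(Triv e1, p') \<in> PnB" using that(1,2) unfolding Smem by blast+
    obtain l where l: "(Triv e1, p) = (Triv e1, Arr l)" using PnB_form[OF m(1)] by blast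
    obtain l' where l': "(Triv e1, p') = (Triv e1, Arr l')" using PnB_form[OF m(2)] by blast
    have pl: "p = Arr l" "p' = Arr l'" using l l' by simp_all
    have "l \<noteq> l'" using that(3) pl by auto
    then show ?thesis using N_disj[of l l' q] m pl by simp
  qed
  have inj: "inj_on ?f ?S"
  proof (rule inj_onI)
    fix p p' assume pp: "p \<in> ?S" "p' \<in> ?S" "?f p = ?f p'"
    show "p = p'"
    proof (rule ccontr)
      assume np: "p \<noteq> p'"
      have "?f p q = 0" for q
      proof -
        have "?f p q = 0 \<or> ?f p' q = 0" by (rule disj[OF pp(1,2) np])
        then show ?thesis using pp(3) by simp
      qed
      then have "?f p = 0" by (simp add: fun_eq_iff)
      moreover have "?f p \<noteq> 0" using pp(1) unfolding Smem by blast
      ultimately show False by blast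
    qed
  qed
  have ind: "FS.independent ((NB :: (_ \<Rightarrow> 'k) set) - {0})"
  proof (rule indep_disjoint_supports)
    show "0 \<notin> (NB :: (_ \<Rightarrow> 'k) set) - {0}" by simp
    fix x y q assume xy: "x \<in> (NB :: (_ \<Rightarrow> 'k) set) - {0}" "y \<in> (NB :: (_ \<Rightarrow> 'k) set) - {0}" "x \<noteq> y"
    obtain p where p: "p \<in> ?S" "x = ?f p" using xy(1) unfolding NS by blast
    obtain p' where p': "p' \<in> ?S" "y = ?f p'" using xy(2) unfolding NS by blast
    have "p \<noteq> p'" using xy(3) p(2) p'(2) by blast
    then show "x q = 0 \<or> y q = 0" using disj[OF p(1) p'(1)] p(2) p'(2) by simp
  qed
  have "FS.dim (FS.span (NB :: (_ \<Rightarrow> 'k) set)) = FS.dim (FS.span ((NB :: (_ \<Rightarrow> 'k) set) - {0}))"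
    by (simp only: FS.span_delete_0)
  also have "\<dots> = card ((NB :: (_ \<Rightarrow> 'k) set) - {0})" by (rule FS.dim_span_eq_card_independent[OF ind])
  also have "\<dots> = card ?S" unfolding NS by (rule card_image[OF inj])
  finally show ?thesis by (simp only: sp_def)
qed

lemma PnB_empty: "\<not> same_block Q e1 en \<Longrightarrow> PnB = {}"
proof (rule ccontr)
  assume sb: "\<not> same_block Q e1 en" and "PnB \<noteq> {}"
  then obtain l where l: "Arr l \<in> BA" "psrc Q (Arr l) \<noteq> ptgt Q (Arr l)"
    "psrc Q (Arr l) \<in> {e1, en}" "ptgt Q (Arr l) \<in> {e1, en}" by (auto simp: PnB_def)
  have "(psrc Q (Arr l), ptgt Q (Arr l)) \<in> (adj Q)\<^sup>*" using apath_conn[OF conjunct1[OF BA_arr[OF l(1)]]] by simp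
  then have "(e1, en) \<in> (adj Q)\<^sup>*" using l(2-4) adj_sym_rt by auto
  then show False using sb e1V enV by (simp add: same_block_def conn_rel_def)
qed

lemma sp_zero: "\<not> same_block Q e1 en \<Longrightarrow> sp TYPE('k::field) Q Z e1 en = 0"
  using PnB_empty by (simp add: sp_def special_eq)

lemma finDBs: "finite (DBs :: (_ \<Rightarrow> 'k::field) set)" using wf(1) by simp

lemma D_same:
  assumes "same_block Q e1 en"
  shows "FS.dim (FS.span (DAs :: (_ \<Rightarrow> 'k::field) set)) = FS.dim (FS.span (DBs :: (_ \<Rightarrow> 'k) set)) + 1"
proof -
  have sp: "FS.span (DAs :: (_ \<Rightarrow> 'k) set) = FS.span (insert (DA e1) (DBs :: (_ \<Rightarrow> 'k) set))"
    by (rule span_DA)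
  have "FS.dim (FS.span (DAs :: (_ \<Rightarrow> 'k) set)) = FS.dim (FS.span (insert (DA e1) (DBs :: (_ \<Rightarrow> 'k) set)))"
    by (simp only: sp)
  also have "\<dots> = FS.dim (insert (DA e1) (DBs :: (_ \<Rightarrow> 'k) set))" by (rule FS.dim_span)
  also have "\<dots> = FS.dim (DBs :: (_ \<Rightarrow> 'k) set) + 1"
    by (rule dim_insert_fs[OF FS.span_superset finDBs DA_not_in[OF assms]])
  finally show ?thesis by simp
qed

lemma span_D_diff:
  assumes "\<not> same_block Q e1 en"
  shows "FS.span (DAs :: (_ \<Rightarrow> 'k::field) set) = FS.span (DBs :: (_ \<Rightarrow> 'k) set)"
proof -
  have sp: "FS.span (DAs :: (_ \<Rightarrow> 'k) set) = FS.span (insert (DA e1) (DBs :: (_ \<Rightarrow> 'k) set))"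
    by (rule span_DA)
  have "FS.span (insert (DA e1) (DBs :: (_ \<Rightarrow> 'k) set)) = FS.span DBs"
    by (rule FS.span_redundant[OF DA_in[OF assms]])
  then show ?thesis using sp by simp
qed

lemma Im0_diff:
  assumes "\<not> same_block Q e1 en"
  shows "(Im0 QB ZB :: (_ \<Rightarrow> 'k::field) set) = Im0 Q Z"
proof -
  have "(Im0 QB ZB :: (_ \<Rightarrow> 'k) set) = FS.span (UA \<union> DBs)"
    using Im0B_eq PnB_empty[OF assms] by simp
  also have "\<dots> = {x + y | x y. x \<in> FS.span UA \<and> y \<in> FS.span DBs}" by (rule FS.span_Un)
  also have "\<dots> = {x + y | x y. x \<in> FS.span UA \<and> y \<in> FS.span (DAs :: (_ \<Rightarrow> 'k) set)}"
  proof -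
    have e: "FS.span (DAs :: (_ \<Rightarrow> 'k) set) = FS.span DBs" by (rule span_D_diff[OF assms])
    show ?thesis by (simp only: e)
  qed
  also have "\<dots> = FS.span (UA \<union> DAs)" by (rule FS.span_Un[symmetric])
  also have "\<dots> = Im0 Q Z" by (rule Im0A_eq[symmetric])
  finally show ?thesis .
qed

end


lemma bsum_reduce:
  assumes "finite P" "P' \<subseteq> P" "f \<in> spanned P'" "g \<in> spanned P'"
  shows "(\<Sum>p\<in>P. \<Sum>q\<in>P. fscale (f p * g q) (B p q)) = (\<Sum>p\<in>P'. \<Sum>q\<in>P'. fscale (f p * g q) (B p q) :: 'z \<Rightarrow> 'k::field)"
proof -
  have fin': "finite P'" using assms(1,2) finite_subset by blast
  have "(\<Sum>p\<in>P. \<Sum>q\<in>P. fscale (f p * g q) (B p q)) = (\<Sum>p\<in>P'. \<Sum>q\<in>P. fscale (f p * g q) (B p q) :: 'z \<Rightarrow> 'k)"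
  proof (rule sum.mono_neutral_right[OF assms(1,2)], rule ballI)
    fix p assume "p \<in> P - P'"
    then have "f p = 0" using assms(3) by (auto simp: spanned_def)
    then show "(\<Sum>q\<in>P. fscale (f p * g q) (B p q)) = (0 :: 'z \<Rightarrow> 'k)" by (simp add: fscale_def fun_eq_iff)
  qed
  also have "\<dots> = (\<Sum>p\<in>P'. \<Sum>q\<in>P'. fscale (f p * g q) (B p q))"
  proof (rule sum.cong[OF refl], rule sum.mono_neutral_right[OF assms(1,2)], rule ballI)
    fix p q assume "q \<in> P - P'"
    then have "g q = 0" using assms(4) by (auto simp: spanned_def)
    then show "fscale (f p * g q) (B p q) = (0 :: 'z \<Rightarrow> 'k)" by (simp add: fscale_def fun_eq_iff)
  qed
  finally show ?thesis .
qed

context GS begin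

lemma P1A_LA_nen: "p \<in> P1A - LA \<Longrightarrow> snd p \<noteq> Triv en"
proof
  assume p: "p \<in> P1A - LA" and e: "snd p = Triv en"
  obtain a g where ag: "p = (Arr [a], g)" "a \<in> arrs Q" "g \<in> BA" "src Q a = psrc Q g" "tgt Q a = ptgt Q g"
    using p by (metis DiffD1 P1A_iff surj_pair)
  then have "p \<in> LA" using e by (auto simp: LA_def)
  then show False using p by blast
qed

lemma br_b_eq:
  assumes "p \<in> P1A - LA" "q \<in> P1A - LA"
  shows "br_b QB ZB p q = (br_b Q Z p q :: _ \<Rightarrow> 'k::comm_ring_1)"
proof -
  obtain a g where p: "p = (a, g)" by (cases p)
  obtain b e where q: "q = (b, e)" by (cases q)
  have g: "g \<noteq> Triv en" using P1A_LA_nen[OF assms(1)] p by simp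
  have e: "e \<noteq> Triv en" using P1A_LA_nen[OF assms(2)] q by simp
  have r1: "(repl QB ZB (arrow_of a) g e :: _ \<Rightarrow> 'k) = repl Q Z (arrow_of a) g e" by (rule repl_eq_B[OF g])
  have r2: "(repl QB ZB (arrow_of b) e g :: _ \<Rightarrow> 'k) = repl Q Z (arrow_of b) e g" by (rule repl_eq_B[OF e])
  show ?thesis unfolding p q br_b_def prod.case r1 r2 ..
qed

lemma bracket_eq:
  assumes charok: "\<forall>\<alpha>\<in>arrs Q. src Q \<alpha> = tgt Q \<alpha> \<and> src Q \<alpha> \<in> {e1, en} \<longrightarrow>
           (\<forall>m::nat. m \<ge> 2 \<and> replicate m \<alpha> \<in> Z \<longrightarrow> \<not> CHAR('k::field) dvd m)"
    and x: "(x :: _ \<Rightarrow> 'k) \<in> Ker1 Q Z" and y: "y \<in> Ker1 Q Z"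
  shows "bracket QB ZB x y = bracket Q Z x y"
proof -
  have xs: "x \<in> spanned (P1A - LA)" by (rule KerA_sub(1)[OF charok x])
  have ys: "y \<in> spanned (P1A - LA)" by (rule KerA_sub(1)[OF charok y])
  have "bracket QB ZB x y = (\<Sum>p\<in>P1A - LA. \<Sum>q\<in>P1A - LA. fscale (x p * y q) (br_b QB ZB p q))"
    unfolding bracket_def Q1B using P1A_LA_sub
    by (intro bsum_reduce[OF finP1B[unfolded Q1B] _ xs ys]) (auto simp: Q1B)
  also have "\<dots> = (\<Sum>p\<in>P1A - LA. \<Sum>q\<in>P1A - LA. fscale (x p * y q) (br_b Q Z p q))"
    by (intro sum.cong refl) (simp add: br_b_eq)
  also have "\<dots> = bracket Q Z x y"
    unfolding bracket_def by (rule bsum_reduce[OF finP1A _ xs ys, symmetric]) blast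
  finally show ?thesis .
qed

lemma main_formula:
  assumes charok: "\<forall>\<alpha>\<in>arrs Q. src Q \<alpha> = tgt Q \<alpha> \<and> src Q \<alpha> \<in> {e1, en} \<longrightarrow>
           (\<forall>m::nat. m \<ge> 2 \<and> replicate m \<alpha> \<in> Z \<longrightarrow> \<not> CHAR('k::field) dvd m)"
  shows "hh1_dim TYPE('k) Q Z =
           hh1_dim TYPE('k) QB ZB - 1
           - int (kspp TYPE('k) Q Z e1 en) + int (sp TYPE('k) Q Z e1 en)
           + int (ncomp Q) - int (ncomp QB)"
proof -
  define KA where "KA = kdim (Ker1 Q Z :: (_ \<Rightarrow> 'k) set)"
  define KB where "KB = kdim (Ker1 QB ZB :: (_ \<Rightarrow> 'k) set)"
  define IA where "IA = kdim (Im0 Q Z :: (_ \<Rightarrow> 'k) set)"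
  define IB where "IB = kdim (Im0 QB ZB :: (_ \<Rightarrow> 'k) set)"
  define ks where "ks = kspp TYPE('k) Q Z e1 en"
  define s where "s = sp TYPE('k) Q Z e1 en"
  define dU where "dU = FS.dim (FS.span (UA :: (_ \<Rightarrow> 'k) set))"
  define dA where "dA = FS.dim (FS.span (DAs :: (_ \<Rightarrow> 'k) set))"
  define dB where "dB = FS.dim (FS.span (DBs :: (_ \<Rightarrow> 'k) set))"
  have hA: "hh1_dim TYPE('k) Q Z = int KA - int IA" by (simp add: hh1_dim_def KA_def IA_def)
  have hB: "hh1_dim TYPE('k) QB ZB = int KB - int IB" by (simp add: hh1_dim_def KB_def IB_def)
  have K: "KB = KA + ks"
    unfolding KA_def KB_def ks_def kspp_def Zspp_eq by (rule Ker_dim[OF charok])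
  have IAe: "IA = dU + dA" unfolding IA_def dU_def dA_def by (rule dim_Im0A)
  have IBe: "IB = dU + dB + s" unfolding IB_def dU_def dB_def s_def dim_NB[symmetric] by (rule dim_Im0B)
  have D: "int dA = int dB + 1 - int (ncomp Q) + int (ncomp QB)"
  proof (cases "same_block Q e1 en")
    case True
    have "dA = dB + 1" unfolding dA_def dB_def by (rule D_same[OF True])
    moreover have "ncomp Q = ncomp QB" by (rule ncomp_same[OF True])
    ultimately show ?thesis by simp
  next
    case False
    have "FS.span (DAs :: (_ \<Rightarrow> 'k) set) = FS.span DBs" by (rule span_D_diff[OF False])
    then have "dA = dB" unfolding dA_def dB_def by simp
    moreover have "ncomp Q = ncomp QB + 1" by (rule ncomp_diff[OF False])
    ultimately show ?thesis by simp
  qed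
  show ?thesis unfolding hA hB ks_def[symmetric] s_def[symmetric] using K IAe IBe D by simp
qed

lemma embeds:
  assumes charok: "\<forall>\<alpha>\<in>arrs Q. src Q \<alpha> = tgt Q \<alpha> \<and> src Q \<alpha> \<in> {e1, en} \<longrightarrow>
           (\<forall>m::nat. m \<ge> 2 \<and> replicate m \<alpha> \<in> Z \<longrightarrow> \<not> CHAR('k::field) dvd m)"
    and nsb: "\<not> same_block Q e1 en"
  shows "hh1_lie_embeds TYPE('k) Q Z QB ZB"
  unfolding hh1_lie_embeds_def
proof (rule exI[of _ id], intro conjI ballI allI)
  fix x :: "_ \<Rightarrow> 'k" assume x: "x \<in> Ker1 Q Z"
  show "id x \<in> Ker1 QB ZB" using KerA_sub(2)[OF charok x] by simp
  have e: "(Im0 QB ZB :: (_ \<Rightarrow> 'k) set) = Im0 Q Z" by (rule Im0_diff[OF nsb])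
  show "(id x \<in> Im0 QB ZB) = (x \<in> Im0 Q Z)" unfolding e by simp
  fix y :: "_ \<Rightarrow> 'k" assume y: "y \<in> Ker1 Q Z"
  show "id (x + y) = id x + id y" by simp
  have "id (bracket Q Z x y) - bracket QB ZB (id x) (id y) = 0" using bracket_eq[OF charok x y] by simp
  moreover have "(0 :: _ \<Rightarrow> 'k) \<in> Im0 QB ZB" unfolding Im0B_eq by (rule FS.span_zero)
  ultimately show "id (bracket Q Z x y) - bracket QB ZB (id x) (id y) \<in> Im0 QB ZB" by simp
next
  fix c and x :: "_ \<Rightarrow> 'k" show "id (fscale c x) = fscale c (id x)" by simp
qed

end


theorem theorem3p20:
  fixes Q :: "('v,'a) quiver" and Z :: "'a list set" and e1 en :: 'v
  assumes "monomial_algebra Q Z"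
    and "e1 \<in> verts Q" and "en \<in> verts Q" and "e1 \<noteq> en"
    and "non_isolated Q e1" and "non_isolated Q en"
    and "\<forall>\<alpha>\<in>arrs Q. src Q \<alpha> = tgt Q \<alpha> \<and> src Q \<alpha> \<in> {e1, en} \<longrightarrow>
           (\<forall>m::nat. m \<ge> 2 \<and> replicate m \<alpha> \<in> Z \<longrightarrow> \<not> CHAR('k::field) dvd m)"
  shows "hh1_dim TYPE('k) Q Z =
           hh1_dim TYPE('k) (glue Q e1 en) (glueZ Q Z e1 en) - 1
           - int (kspp TYPE('k) Q Z e1 en) + int (sp TYPE('k) Q Z e1 en)
           + int (ncomp Q) - int (ncomp (glue Q e1 en)) \<and>
         (same_block Q e1 en \<longrightarrow>
           hh1_dim TYPE('k) Q Z =
           hh1_dim TYPE('k) (glue Q e1 en) (glueZ Q Z e1 en) - 1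
           - int (kspp TYPE('k) Q Z e1 en) + int (sp TYPE('k) Q Z e1 en)) \<and>
         (\<not> same_block Q e1 en \<longrightarrow>
           hh1_lie_embeds TYPE('k) Q Z (glue Q e1 en) (glueZ Q Z e1 en) \<and>
           hh1_dim TYPE('k) Q Z =
           hh1_dim TYPE('k) (glue Q e1 en) (glueZ Q Z e1 en) - int (kspp TYPE('k) Q Z e1 en))"
proof -
  interpret G: GS Q Z e1 en
    using assms(1-6) by unfold_locales
  have M: "hh1_dim TYPE('k) Q Z =
           hh1_dim TYPE('k) (glue Q e1 en) (glueZ Q Z e1 en) - 1
           - int (kspp TYPE('k) Q Z e1 en) + int (sp TYPE('k) Q Z e1 en)
           + int (ncomp Q) - int (ncomp (glue Q e1 en))"
    by (rule G.main_formula[OF assms(7)])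
  show ?thesis
  proof (intro conjI impI)
    show "hh1_dim TYPE('k) Q Z =
           hh1_dim TYPE('k) (glue Q e1 en) (glueZ Q Z e1 en) - 1
           - int (kspp TYPE('k) Q Z e1 en) + int (sp TYPE('k) Q Z e1 en)
           + int (ncomp Q) - int (ncomp (glue Q e1 en))" by (rule M)
  next
    assume sb: "same_block Q e1 en"
    have "ncomp Q = ncomp (glue Q e1 en)" by (rule G.ncomp_same[OF sb])
    then show "hh1_dim TYPE('k) Q Z =
           hh1_dim TYPE('k) (glue Q e1 en) (glueZ Q Z e1 en) - 1
           - int (kspp TYPE('k) Q Z e1 en) + int (sp TYPE('k) Q Z e1 en)" using M by simp
  next
    assume nsb: "\<not> same_block Q e1 en"
    show "hh1_lie_embeds TYPE('k) Q Z (glue Q e1 en) (glueZ Q Z e1 en)"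
      by (rule G.embeds[OF assms(7) nsb])
  next
    assume nsb: "\<not> same_block Q e1 en"
    have c: "ncomp Q = ncomp (glue Q e1 en) + 1" by (rule G.ncomp_diff[OF nsb])
    have s: "sp TYPE('k) Q Z e1 en = 0" by (rule G.sp_zero[OF nsb])
    show "hh1_dim TYPE('k) Q Z =
           hh1_dim TYPE('k) (glue Q e1 en) (glueZ Q Z e1 en) - int (kspp TYPE('k) Q Z e1 en)"
      using M c s by simp
  qed
qed


end
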